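(* Let $R$ be a finite commutative chain ring with maximal ideal $\langle a\rangle$, $a$ of nilpotency index $t$, residue field $\mathbb F_q$; let $t_i(X_i)$, $I$, $A$ be as in the context. Let $\mathcal K\neq0$ be a Hensel lift of a multivariable semisimple code in $A$, and let $\overline{\mathcal K}$ be its image in $\mathbb F_q[X_1,\dots,X_r]/\langle\bar t_1(X_1),\dots,\bar t_r(X_r)\rangle$ under reduction modulo $\langle a\rangle$. Then $d(\mathcal K)=d(\overline{\mathcal K})$.
   Context: Bars denote reduction mod $\langle a\rangle$, coefficientwise on polynomials. For $i=1,\dots,r$, $t_i(X_i)\in R[X_i]$ is monic with $\bar t_i$ square-free; $I=\langle t_1(X_1),\dots,t_r(X_r)\rangle$, $A=R[X_1,\dots,X_r]/I$. A semisimple code is an ideal of $A$. Elements of $A$ (resp. of the reduced algebra over $\mathbb F_q$) are identified with coefficient vectors with respect to the monomial basis $X_1^{i_1}\cdots X_r^{i_r}$, $0\le i_k<\deg t_k$; $d(\cdot)$ is the minimum Hamming weight (number of nonzero coordinates) of the nonzero elements of a code. An admissible family for a code $\mathcal K$ is a family $G_0,\dots,G_t\in R[X_1,\dots,X_r]$ with $\bigcap_{i=0}^t\mathrm{Ann}_A\langle G_i+I\rangle=0$, $\mathrm{Ann}_A\langle G_i+I\rangle+\mathrm{Ann}_A\langle G_j+I\rangle=A$ for $i\ne j$, and $\mathcal K=\langle G_1,aG_2,\dots,a^{t-1}G_t\rangle+I$. $\mathcal K$ is a Hensel lift of a multivariable semisimple code if it has an admissible family with $\langle G_1+I\rangle\neq0$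 and $\langle G_i+I\rangle=0$ for all $i=2,\dots,t$. *)

theory Defs
  imports "HOL-Library.Poly_Mapping" "HOL-Computational_Algebra.Polynomial"
begin

(* Multivariate polynomials over R in variables X_1, X_2, ... :
  finitely supported maps from monomials (exponent vectors, nat \<Rightarrow>\<^sub>0 nat)
  to coefficients. *)
type_synonym 'a mpoly = "(nat \<Rightarrow>\<^sub>0 nat) \<Rightarrow>\<^sub>0 'a"

definition is_ideal :: "'b::comm_ring_1 set \<Rightarrow> bool" where
  "is_ideal J \<longleftrightarrow> 0 \<in> J \<and> (\<forall>x\<in>J. \<forall>y\<in>J. x + y \<in> J) \<and> (\<forall>x\<in>J. \<forall>r. r * x \<in> J)"

definition gen_ideal :: "'b::comm_ring_1 set \<Rightarrow> 'b set" where
  "gen_ideal S = \<Inter>{J. is_ideal J \<and> S \<subseteq> J}"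

definition principal :: "'b::comm_ring_1 \<Rightarrow> 'b set" where
  "principal x = {r * x | r. True}"

definition maximal_ideal :: "'b::comm_ring_1 set \<Rightarrow> bool" where
  "maximal_ideal M \<longleftrightarrow> is_ideal M \<and> M \<noteq> UNIV \<and>
     (\<forall>J. is_ideal J \<and> M \<subseteq> J \<longrightarrow> J = M \<or> J = UNIV)"

definition chain_ring :: "'b::comm_ring_1 itself \<Rightarrow> bool" where
  "chain_ring _ \<longleftrightarrow> (\<forall>J K :: 'b set. is_ideal J \<and> is_ideal K \<longrightarrow> J \<subseteq> K \<or> K \<subseteq> J)"

(* Reduction modulo \<langle>a\<rangle>: an element of R/\<langle>a\<rangle> is represented by its coset. *)
definition residue :: "'b::comm_ring_1 \<Rightarrow> 'b \<Rightarrow> 'b set" where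
  "residue a c = {x. x - c \<in> principal a}"

definition embed_var :: "nat \<Rightarrow> 'b::comm_ring_1 poly \<Rightarrow> 'b mpoly" where
  "embed_var i p = (\<Sum>k\<le>degree p. Poly_Mapping.single (Poly_Mapping.single i k) (coeff p k))"

(* bar p is square-free in F_q[X], F_q = R/\<langle>a\<rangle>: there are no f, g over R
  with bar f a non-unit (i.e. of positive degree; bar p \<noteq> 0 as p is monic)
  and bar f ^ 2 * bar g = bar p. *)
definition squarefree_mod :: "'b::comm_ring_1 \<Rightarrow> 'b poly \<Rightarrow> bool" where
  "squarefree_mod a p \<longleftrightarrow>
     \<not> (\<exists>f g. (\<exists>k\<ge>1. coeff f k \<notin> principal a) \<and>
              (\<forall>k. coeff (f ^ 2 * g - p) k \<in> principal a))"

(* Annihilator in A = R[X]/I of the ideal \<langle>G + I\<rangle>, as an ideal of R[X] containing I. *)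
definition ann_mod :: "'b::comm_ring_1 mpoly set \<Rightarrow> 'b mpoly \<Rightarrow> 'b mpoly set" where
  "ann_mod I G = {f. f * G \<in> I}"

(* Monomial basis of A: X_1^{i_1}...X_r^{i_r} with i_k < deg t_k. *)
definition basis_monos :: "nat \<Rightarrow> (nat \<Rightarrow> 'b::zero poly) \<Rightarrow> (nat \<Rightarrow>\<^sub>0 nat) set" where
  "basis_monos r tp = {m. \<forall>i. (i \<in> {1..r} \<longrightarrow> Poly_Mapping.lookup m i < degree (tp i)) \<and>
                             (i \<notin> {1..r} \<longrightarrow> Poly_Mapping.lookup m i = 0)}"

(* Coefficient vectors (w.r.t. the monomial basis) of the elements of a code K \<subseteq> R[X]
  (an ideal containing I): the reduced representatives lying in K. *)
definition code_vectors :: "nat \<Rightarrow> (nat \<Rightarrow> 'b::comm_ring_1 poly) \<Rightarrow> 'b mpoly set \<Rightarrow> ((nat \<Rightarrow>\<^sub>0 nat) \<Rightarrow> 'b) set" where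
  "code_vectors r tp K = {Poly_Mapping.lookup p | p. p \<in> K \<and> Poly_Mapping.keys p \<subseteq> basis_monos r tp}"

definition reduced_vectors :: "'b::comm_ring_1 \<Rightarrow> nat \<Rightarrow> (nat \<Rightarrow> 'b poly) \<Rightarrow> 'b mpoly set \<Rightarrow> ((nat \<Rightarrow>\<^sub>0 nat) \<Rightarrow> 'b set) set" where
  "reduced_vectors a r tp K = (\<lambda>v m. residue a (v m)) ` code_vectors r tp K"

definition min_dist :: "'z \<Rightarrow> ('i \<Rightarrow> 'z) set \<Rightarrow> nat" where
  "min_dist z C = Min ((\<lambda>v. card {m. v m \<noteq> z}) ` (C - {\<lambda>_. z}))"

end

theory Submission
  imports Defs
begin

abbreviation lk where "lk \<equiv> Poly_Mapping.lookup"
abbreviation ks where "ks \<equiv> Poly_Mapping.keys"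
abbreviation sg where "sg \<equiv> Poly_Mapping.single"

lemma lookup_smult0: "lk (sg 0 c * p) m = c * lk p m"
  by (simp add: mult_map_scale_conv_mult[symmetric] map.rep_eq when_def)

lemma keys_smult0: "ks (sg 0 c * p) \<subseteq> ks p"
  by (auto simp: in_keys_iff lookup_smult0)

lemma poly_sum_single: "(p::'k \<Rightarrow>\<^sub>0 'b::comm_monoid_add) = (\<Sum>\<beta>\<in>ks p. sg \<beta> (lk p \<beta>))"
proof (rule poly_mapping_eqI)
  fix k
  show "lk p k = lk (\<Sum>\<beta>\<in>ks p. sg \<beta> (lk p \<beta>)) k"
    by (simp add: lookup_sum lookup_single when_def in_keys_iff)
qed

lemma poly_induct[case_names zero single add]:
  fixes p :: "'k \<Rightarrow>\<^sub>0 'b::comm_monoid_add"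
  assumes "P 0" "\<And>\<beta> c. P (sg \<beta> c)" "\<And>p q. P p \<Longrightarrow> P q \<Longrightarrow> P (p+q)"
  shows "P p"
proof -
  have "P (\<Sum>\<beta>\<in>S. sg \<beta> (lk p \<beta>))" if "finite S" for S
    using that by (induction S rule: finite_induct) (auto intro: assms)
  then show ?thesis by (subst poly_sum_single) simp
qed

definition Lin :: "('k \<Rightarrow> 'b::zero \<Rightarrow> 'c::comm_monoid_add) \<Rightarrow> ('k \<Rightarrow>\<^sub>0 'b) \<Rightarrow> 'c" where
  "Lin \<phi> p = (\<Sum>\<beta>\<in>ks p. \<phi> \<beta> (lk p \<beta>))"

lemma Lin_superset:
  assumes "\<And>\<beta>. \<phi> \<beta> 0 = 0" "finite S" "ks p \<subseteq> S"
  shows "Lin \<phi> p = (\<Sum>\<beta>\<in>S. \<phi> \<beta> (lk p \<beta>))"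
  unfolding Lin_def
  by (rule sum.mono_neutral_left) (use assms in \<open>auto simp: in_keys_iff\<close>)

lemma Lin_add:
  fixes \<phi> :: "'k \<Rightarrow> 'b::monoid_add \<Rightarrow> 'c::comm_monoid_add"
  assumes "\<And>\<beta>. \<phi> \<beta> 0 = 0" "\<And>\<beta> x y. \<phi> \<beta> (x+y) = \<phi> \<beta> x + \<phi> \<beta> y"
  shows "Lin \<phi> (p+q) = Lin \<phi> p + Lin \<phi> q"
proof -
  let ?S = "ks p \<union> ks q"
  have "ks (p+q) \<subseteq> ?S" by (rule keys_add)
  then have "Lin \<phi> (p+q) = (\<Sum>\<beta>\<in>?S. \<phi> \<beta> (lk (p+q) \<beta>))"
    by (intro Lin_superset assms) auto
  also have "\<dots> = (\<Sum>\<beta>\<in>?S. \<phi> \<beta> (lk p \<beta>)) + (\<Sum>\<beta>\<in>?S. \<phi> \<beta> (lk q \<beta>))"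
    by (simp add: lookup_add assms sum.distrib)
  also have "\<dots> = Lin \<phi> p + Lin \<phi> q"
    by (subst (1 2) Lin_superset[of \<phi>]) (use assms in auto)
  finally show ?thesis .
qed

lemma Lin_single:
  assumes "\<And>\<beta>. \<phi> \<beta> 0 = 0"
  shows "Lin \<phi> (sg \<beta> c) = \<phi> \<beta> c"
  using assms by (cases "c = 0") (auto simp: Lin_def)

lemma Lin_zero[simp]: "Lin \<phi> 0 = 0"
  by (simp add: Lin_def)

lemma ideal_0: "is_ideal J \<Longrightarrow> 0 \<in> J" by (simp add: is_ideal_def)
lemma ideal_add: "is_ideal J \<Longrightarrow> x \<in> J \<Longrightarrow> y \<in> J \<Longrightarrow> x + y \<in> J" by (simp add: is_ideal_def)
lemma ideal_multL: "is_ideal J \<Longrightarrow> x \<in> J \<Longrightarrow> r * x \<in> J" by (simp add: is_ideal_def)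
lemma ideal_multR: "is_ideal J \<Longrightarrow> x \<in> J \<Longrightarrow> x * r \<in> J"
  using ideal_multL[of J x r] by (simp add: mult.commute)
lemma ideal_uminus: "is_ideal J \<Longrightarrow> x \<in> J \<Longrightarrow> - x \<in> J"
  using ideal_multL[of J x "-1"] by simp
lemma ideal_diff: "is_ideal J \<Longrightarrow> x \<in> J \<Longrightarrow> y \<in> J \<Longrightarrow> x - y \<in> J"
  using ideal_add[of J x "-y"] ideal_uminus[of J y] by simp
lemma ideal_sum: "is_ideal J \<Longrightarrow> (\<And>i. i \<in> S \<Longrightarrow> f i \<in> J) \<Longrightarrow> sum f S \<in> J"
  by (induction S rule: infinite_finite_induct) (auto intro: ideal_0 ideal_add)
lemma ideal_UNIV: "is_ideal UNIV" by (simp add: is_ideal_def)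

lemma gen_ideal_ideal: "is_ideal (gen_ideal S)"
  unfolding gen_ideal_def is_ideal_def by auto
lemma gen_ideal_sub: "S \<subseteq> gen_ideal S"
  unfolding gen_ideal_def by auto
lemma gen_ideal_least: "is_ideal J \<Longrightarrow> S \<subseteq> J \<Longrightarrow> gen_ideal S \<subseteq> J"
  unfolding gen_ideal_def by auto

lemma principal_ideal: "is_ideal (principal x)"
  unfolding is_ideal_def principal_def
proof (intro conjI ballI allI)
  show "0 \<in> {r * x |r. True}" by (auto intro: exI[of _ 0])
next
  fix u v assume "u \<in> {r * x |r. True}" "v \<in> {r * x |r. True}"
  then obtain r s where "u = r * x" "v = s * x" by auto
  then show "u + v \<in> {r * x |r. True}" by (auto simp: distrib_right intro: exI[of _ "r+s"])
next
  fix u w assume "u \<in> {r * x |r. True}"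
  then obtain r where "u = r * x" by auto
  then show "w * u \<in> {r * x |r. True}" by (auto intro: exI[of _ "w*r"])
qed

lemma in_principal: "y \<in> principal x \<longleftrightarrow> (\<exists>r. y = r * x)"
  by (simp add: principal_def)


section \<open>Local ring facts\<close>

locale rloc =
  fixes a :: "'a::{comm_ring_1,finite}" and t :: nat
  assumes chain: "chain_ring TYPE('a)" and max: "maximal_ideal (principal a)"
    and t1: "t \<ge> 1" and at: "a ^ t = 0" and at1: "a ^ (t - 1) \<noteq> 0"
begin

lemma unit: assumes "c \<notin> principal a" shows "\<exists>d. c * d = 1"
proof -
  have ic: "is_ideal (principal c)" "is_ideal (principal a)" by (rule principal_ideal)+
  have cc: "c \<in> principal c" by (auto simp: in_principal intro: exI[of _ 1])
  from chain ic have "principal c \<subseteq> principal a \<or> principal a \<subseteq> principal c"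
    unfolding chain_ring_def by blast
  then show ?thesis
  proof
    assume "principal c \<subseteq> principal a" with cc assms show ?thesis by blast
  next
    assume "principal a \<subseteq> principal c"
    with max ic have "principal c = principal a \<or> principal c = UNIV"
      unfolding maximal_ideal_def by blast
    with cc assms have "1 \<in> principal c" by auto
    then show ?thesis by (auto simp: in_principal mult.commute)
  qed
qed

lemma ann_char: "a ^ (t - 1) * c = 0 \<longleftrightarrow> c \<in> principal a"
proof
  assume h: "a ^ (t - 1) * c = 0"
  show "c \<in> principal a"
  proof (rule ccontr)
    assume "c \<notin> principal a"
    then obtain d where "c * d = 1" using unit by blast
    then have "a ^ (t - 1) = a ^ (t - 1) * c * d" by (simp add: mult.assoc)
    with h at1 show False by simp
  qed
next
  assume "c \<in> principal a"
  then obtain s where "c = s * a" by (auto simp: in_principal)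
  then have "a ^ (t - 1) * c = s * a ^ (Suc (t - 1))" by (simp add: algebra_simps)
  also have "Suc (t - 1) = t" using t1 by simp
  finally show "a ^ (t - 1) * c = 0" using at by simp
qed

lemma pow_nz: assumes "j < t" shows "a ^ j \<noteq> 0"
proof
  assume "a ^ j = 0"
  then have "a ^ j * a ^ (t - 1 - j) = 0" by simp
  then have "a ^ (t - 1) = 0" using assms by (simp add: power_add[symmetric])
  with at1 show False by simp
qed

lemma pow_unit_nz: assumes "j < t" "c \<notin> principal a" shows "a ^ j * c \<noteq> 0"
proof
  assume h: "a ^ j * c = 0"
  obtain d where "c * d = 1" using unit assms(2) by blast
  then have "a ^ j = a ^ j * c * d" by (simp add: mult.assoc)
  with h pow_nz[OF assms(1)] show False by simp
qed

end

section \<open>Univariate embedding\<close>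

definition Xv :: "nat \<Rightarrow> 'a::comm_ring_1 mpoly" where "Xv i = sg (sg i 1) 1"

lemma Xv_pow: "Xv i ^ k = sg (sg i k) 1"
  by (induction k) (auto simp: Xv_def mult_single single_add[symmetric] add.commute)

lemma embed_var_alt: "embed_var i p = poly (map_poly (sg 0) p) (Xv i)"
proof -
  have d: "degree (map_poly (sg 0) p) = degree p"
    by (rule degree_map_poly) (metis lookup_single_eq lookup_zero)
  show ?thesis
    unfolding embed_var_def poly_altdef d
    by (intro sum.cong refl) (simp add: coeff_map_poly Xv_pow mult_single)
qed

lemma E_pCons: "embed_var i (pCons c p) = sg 0 c + Xv i * embed_var i p"
  by (simp add: embed_var_alt map_poly_pCons)

lemma E_0[simp]: "embed_var i 0 = 0"
  by (simp add: embed_var_def)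

lemma E_add: "embed_var i (p + q) = embed_var i p + embed_var i q"
proof (induction p arbitrary: q)
  case (pCons c p)
  show ?case
  proof (cases q rule: pCons_cases)
    case (pCons d q')
    have "embed_var i (p + q') = embed_var i p + embed_var i q'"
      using pCons.IH[of q'] .
    then show ?thesis using pCons
      by (simp add: E_pCons single_add algebra_simps)
  qed
qed simp

lemma E_smult: "embed_var i (smult c p) = sg 0 c * embed_var i p"
  by (induction p) (auto simp: E_pCons mult_single algebra_simps)

lemma E_mult: "embed_var i (p * q) = embed_var i p * embed_var i q"
proof (induction p)
  case (pCons c p)
  have "embed_var i (pCons 0 (p * q)) = Xv i * embed_var i (p * q)"
    using E_pCons[of i 0 "p*q"] by simp
  then show ?case using pCons
    by (simp add: E_add E_smult E_pCons algebra_simps)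
qed simp

lemma E_uminus: "embed_var i (- p) = - embed_var i p"
proof -
  have "embed_var i p + embed_var i (- p) = 0" using E_add[of i p "-p"] by simp
  then show ?thesis by (rule minus_unique[symmetric])
qed

lemma E_diff: "embed_var i (p - q) = embed_var i p - embed_var i q"
  using E_add[of i p "-q"] E_uminus[of i q] by simp

lemma E_monom: "embed_var i (monom c n) = sg (sg i n) c"
proof -
  have "embed_var i (monom c n) = sg 0 c * Xv i ^ n"
    by (simp add: embed_var_alt map_poly_monom poly_monom)
  then show ?thesis by (simp add: Xv_pow mult_single)
qed

lemma E_1[simp]: "embed_var i 1 = 1"
  using E_monom[of i 1 0] by (simp add: one_pCons[symmetric] monom_0)

lemma E_keys: "ks (embed_var i p) \<subseteq> {sg i k | k. coeff p k \<noteq> 0}"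
proof -
  have "ks (embed_var i p) \<subseteq> (\<Union>k\<in>{..degree p}. ks (sg (sg i k) (coeff p k)))"
    unfolding embed_var_def by (rule keys_sum)
  also have "\<dots> \<subseteq> {sg i k | k. coeff p k \<noteq> 0}" by auto
  finally show ?thesis .
qed

section \<open>Division by monic polynomials\<close>

definition small :: "'a::comm_ring_1 poly \<Rightarrow> 'a poly \<Rightarrow> bool" where
  "small tt r \<longleftrightarrow> r = 0 \<or> degree r < degree tt"

definition remp :: "'a::comm_ring_1 poly \<Rightarrow> 'a poly \<Rightarrow> 'a poly" where
  "remp tt p = snd (pseudo_divmod p tt)"
definition quop :: "'a::comm_ring_1 poly \<Rightarrow> 'a poly \<Rightarrow> 'a poly" where
  "quop tt p = fst (pseudo_divmod p tt)"

lemma divp: assumes "lead_coeff tt = 1"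
  shows "p = tt * quop tt p + remp tt p" "small tt (remp tt p)"
proof -
  have tt: "tt \<noteq> 0" using assms by auto
  have e: "pseudo_divmod p tt = (quop tt p, remp tt p)" by (simp add: quop_def remp_def)
  from pseudo_divmod[OF tt e] assms show "p = tt * quop tt p + remp tt p" "small tt (remp tt p)"
    by (auto simp: small_def)
qed

lemma small_coeff: "small tt r \<Longrightarrow> coeff r k \<noteq> 0 \<Longrightarrow> k < degree tt"
  unfolding small_def using le_degree by fastforce

lemma small_diff: "small tt r1 \<Longrightarrow> small tt r2 \<Longrightarrow> small tt (r1 - r2)"
  unfolding small_def
  by (metis (no_types, lifting) degree_0 degree_diff_le le_neq_implies_less
      linorder_not_le max.absorb1 max.absorb2 nat_le_linear diff_zero minus_diff_eq
      degree_minus)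

lemma monic_mult_degree:
  fixes tt :: "'a::comm_ring_1 poly"
  assumes "lead_coeff tt = 1" "q \<noteq> 0"
  shows "tt * q \<noteq> 0 \<and> degree (tt * q) = degree tt + degree q"
proof -
  have c: "coeff (tt * q) (degree tt + degree q) = lead_coeff q"
    using coeff_mult_degree_sum[of tt q] assms(1) by simp
  then have "coeff (tt * q) (degree tt + degree q) \<noteq> 0" using assms by simp
  then have "degree (tt * q) \<ge> degree tt + degree q" by (rule le_degree)
  moreover have "tt * q \<noteq> 0"
    using c assms(2) by (metis coeff_0 leading_coeff_0_iff)
  ultimately show ?thesis using degree_mult_le[of tt q] by auto
qed

lemma rem_unique:
  fixes tt :: "'a::comm_ring_1 poly"
  assumes "lead_coeff tt = 1" "p = tt * q + r" "small tt r"
  shows "remp tt p = r"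
proof -
  note d = divp[OF assms(1), of p]
  have "tt * (q - quop tt p) = remp tt p - r"
    using d(1) assms(2) by (simp add: algebra_simps)
  moreover have sm: "small tt (remp tt p - r)" using small_diff d(2) assms(3) by blast
  show ?thesis
  proof (cases "q - quop tt p = 0")
    case True then show ?thesis using calculation by simp
  next
    case False
    from monic_mult_degree[OF assms(1) False] calculation sm show ?thesis
      by (auto simp: small_def)
  qed
qed

context fixes tt :: "'a::comm_ring_1 poly" assumes mon: "lead_coeff tt = 1"
begin

lemma rem_add: "remp tt (p + q) = remp tt p + remp tt q"
proof (rule rem_unique[OF mon, of _ "quop tt p + quop tt q"])
  show "p + q = tt * (quop tt p + quop tt q) + (remp tt p + remp tt q)"
    using divp(1)[OF mon, of p] divp(1)[OF mon, of q] by (simp add: algebra_simps)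
  show "small tt (remp tt p + remp tt q)"
    using small_diff[OF divp(2)[OF mon, of p], of "- remp tt q"] divp(2)[OF mon, of q]
    by (metis add_0 degree_minus diff_minus_eq_add minus_zero small_def)
qed

lemma rem_smult: "remp tt (smult c p) = smult c (remp tt p)"
proof (rule rem_unique[OF mon, of _ "smult c (quop tt p)"])
  show "smult c p = tt * smult c (quop tt p) + smult c (remp tt p)"
    using divp(1)[OF mon, of p] by (metis mult_smult_right smult_add_right)
  show "small tt (smult c (remp tt p))"
    using divp(2)[OF mon, of p] unfolding small_def
    by (metis degree_smult_le le_less_trans smult_0_right)
qed

lemma rem_tmult: "remp tt (tt * q) = 0"
  by (rule rem_unique[OF mon, of _ q]) (auto simp: small_def)

lemma rem_small: "small tt p \<Longrightarrow> remp tt p = p"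
  by (rule rem_unique[OF mon, of _ 0]) auto

end


definition upd :: "nat \<Rightarrow> (nat \<Rightarrow>\<^sub>0 nat) \<Rightarrow> (nat \<Rightarrow>\<^sub>0 nat)" where
  "upd i \<beta> = Poly_Mapping.update i 0 \<beta>"

lemma lk_upd: "lk (upd i \<beta>) l = (if l = i then 0 else lk \<beta> l)"
  by (simp add: upd_def lookup_update)

lemma upd_decomp: "\<beta> = upd i \<beta> + sg i (lk \<beta> i)"
  by (rule poly_mapping_eqI) (simp add: lk_upd lookup_add lookup_single when_def)

lemma upd_add: "upd i (\<beta> + \<gamma>) = upd i \<beta> + upd i \<gamma>"
  by (rule poly_mapping_eqI) (simp add: lk_upd lookup_add)

lemma upd_sg: "upd i (sg i k) = 0"
  by (rule poly_mapping_eqI) (simp add: lk_upd lookup_single when_def)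

lemma upd_free: "lk \<delta> i = 0 \<Longrightarrow> upd i \<delta> = \<delta>"
  by (rule poly_mapping_eqI) (simp add: lk_upd)

definition redm :: "(nat \<Rightarrow> 'a::comm_ring_1 poly) \<Rightarrow> nat \<Rightarrow> (nat \<Rightarrow>\<^sub>0 nat) \<Rightarrow> 'a \<Rightarrow> 'a mpoly" where
  "redm tp i \<beta> c = sg 0 c * (embed_var i (remp (tp i) (monom 1 (lk \<beta> i))) * sg (upd i \<beta>) 1)"

definition red :: "(nat \<Rightarrow> 'a::comm_ring_1 poly) \<Rightarrow> nat \<Rightarrow> 'a mpoly \<Rightarrow> 'a mpoly" where
  "red tp i f = Lin (redm tp i) f"

lemma redm_0: "redm tp i \<beta> 0 = 0" by (simp add: redm_def)
lemma redm_add: "redm tp i \<beta> (x + y) = redm tp i \<beta> x + redm tp i \<beta> y"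
  by (simp add: redm_def single_add algebra_simps)

lemma red_single: "red tp i (sg \<beta> c) = redm tp i \<beta> c"
  unfolding red_def by (rule Lin_single) (rule redm_0)
lemma red_add: "red tp i (f + g) = red tp i f + red tp i g"
  unfolding red_def by (rule Lin_add) (rule redm_0, rule redm_add)
lemma red_zero[simp]: "red tp i 0 = 0" by (simp add: red_def)
lemma red_uminus: "red tp i (- f) = - red tp i f"
proof -
  have "red tp i f + red tp i (- f) = 0" using red_add[of tp i f "-f"] by simp
  then show ?thesis by (rule minus_unique[symmetric])
qed
lemma red_diff: "red tp i (f - g) = red tp i f - red tp i g"
  using red_add[of tp i f "-g"] red_uminus[of tp i g] by simp
lemma red_sum: "red tp i (sum F S) = (\<Sum>s\<in>S. red tp i (F s))"
  by (induction S rule: infinite_finite_induct) (auto simp: red_add)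

lemma red_smult0: "red tp i (sg 0 c * f) = sg 0 c * red tp i f"
proof (induction f rule: poly_induct)
  case (single \<beta> x)
  have e: "sg 0 c * sg \<beta> x = sg \<beta> (c * x)" by (simp add: mult_single)
  have f: "sg 0 (c * x) = sg 0 c * (sg 0 x :: 'a mpoly)" by (simp add: mult_single)
  have "red tp i (sg 0 c * sg \<beta> x) = redm tp i \<beta> (c*x)" by (simp add: e red_single)
  also have "\<dots> = sg 0 c * redm tp i \<beta> x" unfolding redm_def by (simp only: f mult.assoc)
  finally show ?case by (simp add: red_single)
next
  case (add p q) then show ?case by (simp add: distrib_left red_add)
qed simp

lemma mult3_single: "sg 0 x * ((A::'a mpoly) * sg u 1) * sg \<delta> y = sg 0 (x * y) * (A * sg (u + \<delta>) (1::'a::comm_ring_1))"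
proof -
  have "sg 0 x * (A * sg u 1) * sg \<delta> y = A * (sg 0 x * sg u 1 * sg \<delta> y)" by (simp add: ac_simps)
  also have "sg 0 x * sg u 1 * sg \<delta> y = sg (u + \<delta>) (x * y)" by (simp add: mult_single)
  also have "\<dots> = sg 0 (x * y) * sg (u + \<delta>) 1" by (simp add: mult_single)
  finally show ?thesis by (simp add: ac_simps)
qed

lemma red_comm_single:
  assumes "lk \<delta> i = 0"
  shows "red tp i (f * sg \<delta> y) = red tp i f * sg \<delta> y"
proof (induction f rule: poly_induct)
  case (single \<beta> x)
  have "lk (\<beta> + \<delta>) i = lk \<beta> i" using assms by (simp add: lookup_add)
  moreover have "upd i (\<beta> + \<delta>) = upd i \<beta> + \<delta>" using assms by (simp add: upd_add upd_free)
  ultimately show ?case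
    by (simp add: mult_single red_single redm_def mult3_single)
next
  case (add p q) then show ?case by (simp add: distrib_right red_add)
qed simp

lemma red_comm:
  assumes "\<And>\<delta>. \<delta> \<in> ks c \<Longrightarrow> lk \<delta> i = 0"
  shows "red tp i (f * c) = red tp i f * c"
proof -
  have "red tp i (f * c) = red tp i (\<Sum>\<delta>\<in>ks c. f * sg \<delta> (lk c \<delta>))"
    by (subst poly_sum_single[of c]) (simp add: sum_distrib_left)
  also have "\<dots> = (\<Sum>\<delta>\<in>ks c. red tp i f * sg \<delta> (lk c \<delta>))"
    by (simp add: red_sum red_comm_single assms)
  also have "\<dots> = red tp i f * c"
    by (subst (2) poly_sum_single[of c]) (simp add: sum_distrib_left)
  finally show ?thesis .
qed

context fixes tp :: "nat \<Rightarrow> 'a::comm_ring_1 poly" and i :: nat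
  assumes mon: "lead_coeff (tp i) = 1"
begin

lemma monom_pCons: "monom (1::'a) n * pCons d p = smult d (monom 1 n) + monom 1 (Suc n) * p"
proof (rule poly_eqI)
  fix k
  show "coeff (monom (1::'a) n * pCons d p) k = coeff (smult d (monom 1 n) + monom 1 (Suc n) * p) k"
  proof (cases "n \<le> k")
    case True
    then obtain m where "k = n + m" using le_Suc_ex by blast
    then show ?thesis by (cases m) (auto simp: coeff_monom_mult coeff_pCons coeff_monom split: nat.split)
  qed (auto simp: coeff_monom_mult coeff_monom coeff_pCons split: nat.split)
qed

lemma red_mulE:
  "red tp i (sg \<gamma> c * embed_var i p) =
     sg 0 c * (embed_var i (remp (tp i) (monom 1 (lk \<gamma> i) * p)) * sg (upd i \<gamma>) 1)"
proof (induction p arbitrary: \<gamma> c)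
  case 0
  have "remp (tp i) 0 = 0" by (rule rem_small[OF mon]) (simp add: small_def)
  then show ?case by simp
next
  case (pCons d p)
  have e1: "sg \<gamma> c * embed_var i (pCons d p) = sg \<gamma> (c * d) + sg (\<gamma> + sg i 1) c * embed_var i p"
    by (simp add: E_pCons Xv_def algebra_simps mult_single)
  have l: "lk (\<gamma> + sg i 1) i = Suc (lk \<gamma> i)" by (simp add: lookup_add)
  have u: "upd i (\<gamma> + sg i 1) = upd i \<gamma>" by (simp add: upd_add upd_sg)
  have "red tp i (sg \<gamma> c * embed_var i (pCons d p)) =
     redm tp i \<gamma> (c * d) + sg 0 c * (embed_var i (remp (tp i) (monom 1 (Suc (lk \<gamma> i)) * p)) * sg (upd i \<gamma>) 1)"
    unfolding e1 red_add red_single pCons.IH l u ..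
  also have "\<dots> = sg 0 c * (embed_var i (remp (tp i) (monom 1 (lk \<gamma> i) * pCons d p)) * sg (upd i \<gamma>) 1)"
  proof -
    let ?n = "lk \<gamma> i" and ?U = "sg (upd i \<gamma>) (1::'a)"
    have "embed_var i (remp (tp i) (monom 1 ?n * pCons d p)) =
        sg 0 d * embed_var i (remp (tp i) (monom 1 ?n)) + embed_var i (remp (tp i) (monom 1 (Suc ?n) * p))"
      by (simp only: monom_pCons rem_add[OF mon] rem_smult[OF mon] E_add E_smult)
    moreover have "redm tp i \<gamma> (c * d) = sg 0 c * (sg 0 d * embed_var i (remp (tp i) (monom 1 ?n)) * ?U)"
    proof -
      have "sg 0 (c * d) = sg 0 c * (sg 0 d :: 'a mpoly)" by (simp add: mult_single)
      then show ?thesis unfolding redm_def by (simp only: ac_simps)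
    qed
    ultimately show ?thesis by (simp only: distrib_left distrib_right)
  qed
  finally show ?case .
qed

lemma red_kill: "red tp i (w * embed_var i (tp i)) = 0"
proof (induction w rule: poly_induct)
  case (single \<beta> c)
  have "remp (tp i) (monom 1 (lk \<beta> i) * tp i) = 0"
    using rem_tmult[OF mon, of "monom 1 (lk \<beta> i)"] by (simp add: mult.commute)
  then show ?case by (simp add: red_mulE)
next
  case (add p q) then show ?case by (simp add: distrib_right red_add)
qed simp

lemma red_id:
  assumes "\<And>\<beta>. \<beta> \<in> ks f \<Longrightarrow> lk \<beta> i < degree (tp i)"
  shows "red tp i f = f"
proof -
  have "red tp i (sg \<beta> (lk f \<beta>)) = sg \<beta> (lk f \<beta>)" if "\<beta> \<in> ks f" for \<beta>
  proof -
    have "remp (tp i) (monom 1 (lk \<beta> i)) = monom 1 (lk \<beta> i)"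
      by (rule rem_small[OF mon]) (use assms[OF that] in \<open>simp add: small_def degree_monom_eq\<close>)
    then have "red tp i (sg \<beta> (lk f \<beta>)) = sg 0 (lk f \<beta>) * (sg (sg i (lk \<beta> i)) 1 * sg (upd i \<beta>) 1)"
      by (simp add: red_single redm_def E_monom)
    also have "\<dots> = sg (sg i (lk \<beta> i) + upd i \<beta>) (lk f \<beta>)" by (simp add: mult_single)
    also have "sg i (lk \<beta> i) + upd i \<beta> = \<beta>" using upd_decomp[of \<beta> i] by (simp add: add.commute)
    finally show ?thesis .
  qed
  then have "red tp i (\<Sum>\<beta>\<in>ks f. sg \<beta> (lk f \<beta>)) = (\<Sum>\<beta>\<in>ks f. sg \<beta> (lk f \<beta>))"
    by (simp add: red_sum)
  then show ?thesis using poly_sum_single[of f] by simp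
qed

lemma red_keys:
  assumes "\<delta> \<in> ks (red tp i f)"
  shows "\<exists>\<beta>\<in>ks f. (\<forall>l. l \<noteq> i \<longrightarrow> lk \<delta> l = lk \<beta> l) \<and> lk \<delta> i < degree (tp i)"
proof -
  have "ks (red tp i f) \<subseteq> (\<Union>\<beta>\<in>ks f. ks (redm tp i \<beta> (lk f \<beta>)))"
    unfolding red_def Lin_def by (rule keys_sum)
  with assms obtain \<beta> where b: "\<beta> \<in> ks f" "\<delta> \<in> ks (redm tp i \<beta> (lk f \<beta>))" by blast
  let ?r = "remp (tp i) (monom 1 (lk \<beta> i))"
  have "\<delta> \<in> ks (embed_var i ?r * sg (upd i \<beta>) 1)"
    using b(2) keys_smult0 unfolding redm_def by blast
  then obtain u v where uv: "\<delta> = u + v" "u \<in> ks (embed_var i ?r)" "v \<in> ks (sg (upd i \<beta>) (1::'a))"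
    using keys_mult by blast
  from uv(2) E_keys obtain k where k: "u = sg i k" "coeff ?r k \<noteq> 0" by blast
  have "k < degree (tp i)" using small_coeff[OF divp(2)[OF mon] k(2)] .
  moreover have "v = upd i \<beta>" using uv(3) by (simp split: if_splits)
  ultimately show ?thesis using b(1) uv(1) k(1)
    by (intro bexI[of _ \<beta>]) (auto simp: lookup_add lookup_single lk_upd)
qed

lemma red_I: "\<exists>h. f - red tp i f = h * embed_var i (tp i)"
proof (induction f rule: poly_induct)
  case (single \<beta> c)
  let ?n = "lk \<beta> i"
  have d: "monom 1 ?n = tp i * quop (tp i) (monom 1 ?n) + remp (tp i) (monom 1 ?n)"
    by (rule divp(1)[OF mon])
  have s: "sg \<beta> c = sg 0 c * (embed_var i (monom 1 ?n) * sg (upd i \<beta>) 1)"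
    using upd_decomp[of \<beta> i] by (simp add: E_monom mult_single add.commute)
  have s2: "embed_var i (monom 1 ?n) = embed_var i (tp i) * embed_var i (quop (tp i) (monom 1 ?n))
        + embed_var i (remp (tp i) (monom 1 ?n))"
    by (subst d) (simp add: E_add E_mult)
  have r: "red tp i (sg \<beta> c) = sg 0 c * (embed_var i (remp (tp i) (monom 1 ?n)) * sg (upd i \<beta>) 1)"
    by (simp add: red_single redm_def)
  have "sg \<beta> c - red tp i (sg \<beta> c) =
     (sg 0 c * embed_var i (quop (tp i) (monom 1 ?n)) * sg (upd i \<beta>) 1) * embed_var i (tp i)"
    unfolding r by (subst s, subst s2) (simp add: algebra_simps)
  then show ?case by blast
next
  case (add p q)
  then obtain h1 h2 where "p - red tp i p = h1 * embed_var i (tp i)" "q - red tp i q = h2 * embed_var i (tp i)"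
    by blast
  then have "(p + q) - red tp i (p + q) = (h1 + h2) * embed_var i (tp i)"
    by (simp add: red_add algebra_simps)
  then show ?case by blast
qed (auto intro: exI[of _ 0])

end


definition xo :: "nat \<Rightarrow> (nat \<Rightarrow>\<^sub>0 nat) \<Rightarrow> bool" where
  "xo r \<beta> \<longleftrightarrow> (\<forall>i. i \<notin> {1..r} \<longrightarrow> lk \<beta> i = 0)"
definition XO :: "nat \<Rightarrow> 'a::zero mpoly \<Rightarrow> bool" where
  "XO r p \<longleftrightarrow> (\<forall>\<beta>\<in>ks p. xo r \<beta>)"

lemma finite_basis: "finite (basis_monos r tp)"
proof -
  let ?B = "\<Union>i\<in>{1..r}. {..<degree (tp i)}"
  have "lk ` basis_monos r tp \<subseteq> {f. \<forall>x. (x \<in> {1..r} \<longrightarrow> f x \<in> ?B) \<and> (x \<notin> {1..r} \<longrightarrow> f x = 0)}"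
    by (auto simp: basis_monos_def)
  moreover have "finite {f. \<forall>x. (x \<in> {1..r} \<longrightarrow> f x \<in> ?B) \<and> (x \<notin> {1..r} \<longrightarrow> f x = 0)}"
    by (rule finite_set_of_finite_funs) auto
  ultimately have "finite (lk ` basis_monos r tp)" by (rule finite_subset)
  then show ?thesis by (rule finite_imageD) (simp add: inj_on_def lookup_inject)
qed

lemma finite_keys_bounded:
  assumes "finite S"
  shows "finite {p :: 'k \<Rightarrow>\<^sub>0 'a::{zero,finite}. ks p \<subseteq> S}"
proof -
  have "lk ` {p :: 'k \<Rightarrow>\<^sub>0 'a. ks p \<subseteq> S} \<subseteq> {f. \<forall>x. (x \<in> S \<longrightarrow> f x \<in> UNIV) \<and> (x \<notin> S \<longrightarrow> f x = 0)}"
    by (auto simp: in_keys_iff)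
  moreover have "finite {f. \<forall>x. (x \<in> S \<longrightarrow> f x \<in> (UNIV::'a set)) \<and> (x \<notin> S \<longrightarrow> f x = 0)}"
    by (rule finite_set_of_finite_funs) (use assms in auto)
  ultimately have "finite (lk ` {p :: 'k \<Rightarrow>\<^sub>0 'a. ks p \<subseteq> S})" by (rule finite_subset)
  then show ?thesis by (rule finite_imageD) (simp add: inj_on_def lookup_inject)
qed

lemma finite_Bset: "finite {p :: 'a::{zero,finite} mpoly. ks p \<subseteq> basis_monos r tp}"
  by (rule finite_keys_bounded[OF finite_basis])

locale nfl =
  fixes r :: nat and tp :: "nat \<Rightarrow> 'a::comm_ring_1 poly" and I :: "'a mpoly set"
  assumes monic: "\<And>i. i \<in> {1..r} \<Longrightarrow> lead_coeff (tp i) = 1"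
    and I_def: "I = gen_ideal ((\<lambda>i. embed_var i (tp i)) ` {1..r})"
begin

lemma I_ideal: "is_ideal I"
  unfolding I_def by (rule gen_ideal_ideal)

lemma gen_in_I: "i \<in> {1..r} \<Longrightarrow> embed_var i (tp i) \<in> I"
  unfolding I_def by (rule subsetD[OF gen_ideal_sub]) (rule imageI)

definition Jset :: "nat \<Rightarrow> 'a mpoly set" where
  "Jset k = {\<Sum>j\<in>{1..k}. h j * embed_var j (tp j) | h. True}"

lemma Jset_intro: "x = (\<Sum>j\<in>{1..k}. h j * embed_var j (tp j)) \<Longrightarrow> x \<in> Jset k"
  unfolding Jset_def by blast

lemma Jset_ideal: "is_ideal (Jset k)"
  unfolding is_ideal_def Jset_def
proof (intro conjI ballI allI)
  show "0 \<in> {\<Sum>j = 1..k. h j * embed_var j (tp j) |h. True}"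
    by (rule CollectI, rule exI[of _ "\<lambda>_. 0"]) simp
next
  fix x y assume "x \<in> {\<Sum>j = 1..k. h j * embed_var j (tp j) |h. True}"
    "y \<in> {\<Sum>j = 1..k. h j * embed_var j (tp j) |h. True}"
  then obtain h1 h2 where "x = (\<Sum>j = 1..k. h1 j * embed_var j (tp j))"
    "y = (\<Sum>j = 1..k. h2 j * embed_var j (tp j))" by auto
  then have "x + y = (\<Sum>j = 1..k. (h1 j + h2 j) * embed_var j (tp j))"
    by (simp add: sum.distrib distrib_right)
  then show "x + y \<in> {\<Sum>j = 1..k. h j * embed_var j (tp j) |h. True}"
    by (rule Jset_intro[where k=k, unfolded Jset_def])
next
  fix x s assume "x \<in> {\<Sum>j = 1..k. h j * embed_var j (tp j) |h. True}"
  then obtain h1 where "x = (\<Sum>j = 1..k. h1 j * embed_var j (tp j))" by auto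
  then have "s * x = (\<Sum>j = 1..k. (s * h1 j) * embed_var j (tp j))"
    by (simp add: sum_distrib_left mult.assoc)
  then show "s * x \<in> {\<Sum>j = 1..k. h j * embed_var j (tp j) |h. True}"
    by (rule Jset_intro[where k=k, unfolded Jset_def])
qed

lemma I_Jset: "I = Jset r"
proof
  show "I \<subseteq> Jset r"
    unfolding I_def
  proof (rule gen_ideal_least[OF Jset_ideal], safe)
    fix i assume i: "i \<in> {1..r}"
    have "(\<Sum>j\<in>{1..r}. (if j = i then 1 else 0) * embed_var j (tp j)) =
        (\<Sum>j\<in>{1..r}. if j = i then embed_var j (tp j) else 0)"
      by (rule sum.cong) auto
    also have "\<dots> = embed_var i (tp i)" using i by (simp add: sum.delta)
    finally have "embed_var i (tp i) = (\<Sum>j\<in>{1..r}. (if j = i then 1 else 0) * embed_var j (tp j))" ..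
    then show "embed_var i (tp i) \<in> Jset r" by (rule Jset_intro)
  qed
  show "Jset r \<subseteq> I"
  proof
    fix x assume "x \<in> Jset r"
    then obtain h where "x = (\<Sum>j\<in>{1..r}. h j * embed_var j (tp j))" unfolding Jset_def by auto
    then show "x \<in> I"
      by (auto intro!: ideal_sum[OF I_ideal] ideal_multL[OF I_ideal] gen_in_I)
  qed
qed

lemma Jset_unique:
  "k \<le> r \<Longrightarrow> p \<in> Jset k \<Longrightarrow> (\<forall>\<beta>\<in>ks p. \<forall>j\<in>{1..k}. lk \<beta> j < degree (tp j)) \<Longrightarrow> p = 0"
proof (induction k arbitrary: p)
  case 0
  then show ?case by (simp add: Jset_def)
next
  case (Suc k)
  from Suc.prems(2) obtain h where p: "p = (\<Sum>j\<in>{1..Suc k}. h j * embed_var j (tp j))"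
    unfolding Jset_def by auto
  have mon: "lead_coeff (tp (Suc k)) = 1" using monic Suc.prems(1) by simp
  have split: "p = h (Suc k) * embed_var (Suc k) (tp (Suc k)) + (\<Sum>j\<in>{1..k}. h j * embed_var j (tp j))"
    unfolding p by (simp add: atLeastAtMostSuc_conv add.commute)
  have "red tp (Suc k) p = p"
    by (rule red_id[where tp=tp and i="Suc k", OF mon]) (use Suc.prems(3) in auto)
  moreover have "red tp (Suc k) (\<Sum>j\<in>{1..k}. h j * embed_var j (tp j)) =
      (\<Sum>j\<in>{1..k}. red tp (Suc k) (h j) * embed_var j (tp j))"
  proof -
    have "red tp (Suc k) (h j * embed_var j (tp j)) = red tp (Suc k) (h j) * embed_var j (tp j)"
      if "j \<in> {1..k}" for j
    proof (rule red_comm)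
      fix \<delta> assume "\<delta> \<in> ks (embed_var j (tp j))"
      then obtain n where "\<delta> = sg j n" using E_keys by blast
      then show "lk \<delta> (Suc k) = 0" using that by (simp add: lookup_single when_def)
    qed
    then show ?thesis by (simp add: red_sum)
  qed
  moreover have "red tp (Suc k) (h (Suc k) * embed_var (Suc k) (tp (Suc k))) = 0"
    by (rule red_kill[where tp=tp and i="Suc k", OF mon])
  moreover have "red tp (Suc k) p = red tp (Suc k) (h (Suc k) * embed_var (Suc k) (tp (Suc k)))
      + red tp (Suc k) (\<Sum>j\<in>{1..k}. h j * embed_var j (tp j))"
    by (subst split) (rule red_add)
  ultimately have "p = (\<Sum>j\<in>{1..k}. red tp (Suc k) (h j) * embed_var j (tp j))"
    by simp
  then have "p \<in> Jset k" by (rule Jset_intro)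
  then show ?case using Suc.IH Suc.prems by auto
qed

lemma uniq: "p \<in> I \<Longrightarrow> ks p \<subseteq> basis_monos r tp \<Longrightarrow> p = 0"
  using Jset_unique[of r p] I_Jset by (auto simp: basis_monos_def subset_iff)

primrec rho :: "nat \<Rightarrow> 'a mpoly \<Rightarrow> 'a mpoly" where
  "rho 0 f = f"
| "rho (Suc k) f = red tp (Suc k) (rho k f)"

lemma rho_props:
  "k \<le> r \<Longrightarrow> XO r f \<Longrightarrow> f - rho k f \<in> I \<and>
     (\<forall>\<beta>\<in>ks (rho k f). xo r \<beta> \<and> (\<forall>j\<in>{1..k}. lk \<beta> j < degree (tp j)))"
proof (induction k)
  case 0 then show ?case using I_ideal by (auto simp: XO_def ideal_0)
next
  case (Suc k)
  have mon: "lead_coeff (tp (Suc k)) = 1" using monic Suc.prems(1) by simp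
  from Suc have IH: "f - rho k f \<in> I"
    "\<forall>\<beta>\<in>ks (rho k f). xo r \<beta> \<and> (\<forall>j\<in>{1..k}. lk \<beta> j < degree (tp j))" by auto
  obtain h where h: "rho k f - red tp (Suc k) (rho k f) = h * embed_var (Suc k) (tp (Suc k))"
    using red_I[where tp=tp and i="Suc k", OF mon] by blast
  have inI: "h * embed_var (Suc k) (tp (Suc k)) \<in> I"
    using Suc.prems(1) by (intro ideal_multL[OF I_ideal] gen_in_I) auto
  have "f - rho (Suc k) f = (f - rho k f) + (rho k f - red tp (Suc k) (rho k f))" by simp
  then have eq2: "f - rho (Suc k) f = (f - rho k f) + h * embed_var (Suc k) (tp (Suc k))"
    by (simp only: h)
  have "f - rho (Suc k) f \<in> I" unfolding eq2 by (rule ideal_add[OF I_ideal IH(1) inI])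
  moreover have "\<forall>\<beta>\<in>ks (rho (Suc k) f). xo r \<beta> \<and> (\<forall>j\<in>{1..Suc k}. lk \<beta> j < degree (tp j))"
  proof
    fix \<delta> assume "\<delta> \<in> ks (rho (Suc k) f)"
    then have "\<exists>\<beta>\<in>ks (rho k f). (\<forall>l. l \<noteq> Suc k \<longrightarrow> lk \<delta> l = lk \<beta> l) \<and> lk \<delta> (Suc k) < degree (tp (Suc k))"
      by (intro red_keys[where tp=tp and i="Suc k", OF mon]) simp
    then obtain \<beta> where b: "\<beta> \<in> ks (rho k f)" "\<forall>l. l \<noteq> Suc k \<longrightarrow> lk \<delta> l = lk \<beta> l"
      "lk \<delta> (Suc k) < degree (tp (Suc k))"
      by blast
    have xb: "xo r \<beta>" "\<forall>j\<in>{1..k}. lk \<beta> j < degree (tp j)" using IH(2) b(1) by auto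
    have "xo r \<delta>" unfolding xo_def
    proof (intro allI impI)
      fix i assume "i \<notin> {1..r}"
      then have "i \<noteq> Suc k" using Suc.prems(1) by auto
      then show "lk \<delta> i = 0" using b(2) xb(1) \<open>i \<notin> {1..r}\<close> by (simp add: xo_def)
    qed
    moreover have "\<forall>j\<in>{1..Suc k}. lk \<delta> j < degree (tp j)"
    proof
      fix j assume j: "j \<in> {1..Suc k}"
      show "lk \<delta> j < degree (tp j)"
      proof (cases "j = Suc k")
        case True then show ?thesis using b(3) by simp
      next
        case False
        then have "j \<in> {1..k}" using j by auto
        then show ?thesis using b(2) xb(2) False by auto
      qed
    qed
    ultimately show "xo r \<delta> \<and> (\<forall>j\<in>{1..Suc k}. lk \<delta> j < degree (tp j))" by blast
  qed
  ultimately show ?case by blast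
qed

definition nf :: "'a mpoly \<Rightarrow> 'a mpoly" where "nf f = rho r f"

lemma nf_cong: "XO r f \<Longrightarrow> f - nf f \<in> I"
  using rho_props[of r f] by (simp add: nf_def)

lemma nf_basis: "XO r f \<Longrightarrow> ks (nf f) \<subseteq> basis_monos r tp"
  using rho_props[of r f] by (auto simp: nf_def basis_monos_def xo_def)

end


definition xpart :: "nat \<Rightarrow> (nat \<Rightarrow>\<^sub>0 nat) \<Rightarrow> (nat \<Rightarrow>\<^sub>0 nat)" where
  "xpart r \<beta> = (\<Sum>i\<in>ks \<beta> \<inter> {1..r}. sg i (lk \<beta> i))"
definition ypart :: "nat \<Rightarrow> (nat \<Rightarrow>\<^sub>0 nat) \<Rightarrow> (nat \<Rightarrow>\<^sub>0 nat)" where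
  "ypart r \<beta> = (\<Sum>i\<in>ks \<beta> - {1..r}. sg i (lk \<beta> i))"
definition yo :: "nat \<Rightarrow> (nat \<Rightarrow>\<^sub>0 nat) \<Rightarrow> bool" where
  "yo r \<alpha> \<longleftrightarrow> (\<forall>i\<in>{1..r}. lk \<alpha> i = 0)"

lemma lk_xpart: "lk (xpart r \<beta>) i = (if i \<in> {1..r} then lk \<beta> i else 0)"
  unfolding xpart_def lookup_sum
  by (cases "i \<in> ks \<beta>") (auto simp: lookup_single when_def in_keys_iff)

lemma lk_ypart: "lk (ypart r \<beta>) i = (if i \<in> {1..r} then 0 else lk \<beta> i)"
  unfolding ypart_def lookup_sum
  by (cases "i \<in> ks \<beta>") (auto simp: lookup_single when_def in_keys_iff)

lemma xy_decomp: "xpart r \<beta> + ypart r \<beta> = \<beta>"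
  by (rule poly_mapping_eqI) (simp add: lookup_add lk_xpart lk_ypart)

lemma xpart_add: "xpart r (\<beta> + \<gamma>) = xpart r \<beta> + xpart r \<gamma>"
  by (rule poly_mapping_eqI) (simp add: lookup_add lk_xpart)
lemma ypart_add: "ypart r (\<beta> + \<gamma>) = ypart r \<beta> + ypart r \<gamma>"
  by (rule poly_mapping_eqI) (simp add: lookup_add lk_ypart)

lemma xo_xpart: "xo r \<beta> \<Longrightarrow> xpart r \<beta> = \<beta>"
  by (rule poly_mapping_eqI) (simp add: lk_xpart xo_def)
lemma xo_ypart: "xo r \<beta> \<Longrightarrow> ypart r \<beta> = 0"
  by (rule poly_mapping_eqI) (simp add: lk_ypart xo_def)
lemma yo_xpart: "yo r \<beta> \<Longrightarrow> xpart r \<beta> = 0"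
  by (rule poly_mapping_eqI) (simp add: lk_xpart yo_def)
lemma yo_ypart: "yo r \<beta> \<Longrightarrow> ypart r \<beta> = \<beta>"
  by (rule poly_mapping_eqI) (simp add: lk_ypart yo_def)
lemma xo_of_xpart: "xo r (xpart r \<beta>)" by (simp add: xo_def lk_xpart)
lemma yo_of_ypart: "yo r (ypart r \<beta>)" by (simp add: yo_def lk_ypart)
lemma yo_add: "yo r \<alpha> \<Longrightarrow> yo r \<beta> \<Longrightarrow> yo r (\<alpha> + \<beta>)" by (simp add: yo_def lookup_add)
lemma xo_add: "xo r \<alpha> \<Longrightarrow> xo r \<beta> \<Longrightarrow> xo r (\<alpha> + \<beta>)" by (simp add: xo_def lookup_add)
lemma xo_0: "xo r 0" by (simp add: xo_def)
lemma yo_0: "yo r 0" by (simp add: yo_def)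

lemma XO_0[simp]: "XO r 0" by (simp add: XO_def)
lemma XO_single: "xo r \<gamma> \<Longrightarrow> XO r (sg \<gamma> c)" by (simp add: XO_def)
lemma XO_sg0: "XO r (sg 0 c)" by (simp add: XO_def xo_0)
lemma XO_1[simp]: "XO r (1::'a::comm_ring_1 mpoly)"
  by (simp add: XO_def xo_0)
lemma XO_add: "XO r p \<Longrightarrow> XO r q \<Longrightarrow> XO r ((p::'a::comm_ring_1 mpoly) + q)"
  unfolding XO_def
proof
  fix \<beta> assume "\<forall>\<beta>\<in>ks p. xo r \<beta>" "\<forall>\<beta>\<in>ks q. xo r \<beta>" "\<beta> \<in> ks (p + q)"
  moreover have "\<beta> \<in> ks p \<union> ks q" using subsetD[OF keys_add \<open>\<beta> \<in> ks (p + q)\<close>] .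
  ultimately show "xo r \<beta>" by auto
qed
lemma XO_mult: "XO r p \<Longrightarrow> XO r q \<Longrightarrow> XO r ((p::'a::comm_ring_1 mpoly) * q)"
  unfolding XO_def
proof
  fix \<beta> assume a: "\<forall>\<beta>\<in>ks p. xo r \<beta>" "\<forall>\<beta>\<in>ks q. xo r \<beta>" "\<beta> \<in> ks (p * q)"
  then obtain u v where "\<beta> = u + v" "u \<in> ks p" "v \<in> ks q"
    using subsetD[OF keys_mult a(3)] by blast
  then show "xo r \<beta>" using a by (simp add: xo_add)
qed
lemma XO_uminus: "XO r p \<Longrightarrow> XO r (- (p::'a::comm_ring_1 mpoly))"
  by (simp add: XO_def keys_minus)
lemma XO_diff: "XO r p \<Longrightarrow> XO r q \<Longrightarrow> XO r ((p::'a::comm_ring_1 mpoly) - q)"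
  using XO_add[of r p "-q"] XO_uminus[of r q] by simp
lemma XO_pow: "XO r p \<Longrightarrow> XO r ((p::'a::comm_ring_1 mpoly) ^ n)"
  by (induction n) (auto intro: XO_mult)
lemma XO_sum: "(\<And>i. i \<in> S \<Longrightarrow> XO r (f i)) \<Longrightarrow> XO r (sum (f :: _ \<Rightarrow> 'a::comm_ring_1 mpoly) S)"
  by (induction S rule: infinite_finite_induct) (auto intro: XO_add)
lemma XO_E: "i \<in> {1..r} \<Longrightarrow> XO r (embed_var i p)"
  using E_keys[of i p] unfolding XO_def xo_def by (force simp: lookup_single when_def)
lemma XO_basis: "ks p \<subseteq> basis_monos r tp \<Longrightarrow> XO r p"
  unfolding XO_def xo_def basis_monos_def by auto
lemma XO_prod_list: "(\<And>x. x \<in> set xs \<Longrightarrow> XO r x) \<Longrightarrow> XO r (prod_list (xs :: 'a::comm_ring_1 mpoly list))"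
  by (induction xs) (auto intro: XO_mult)

definition coefY :: "nat \<Rightarrow> 'a::comm_ring_1 mpoly \<Rightarrow> (nat \<Rightarrow>\<^sub>0 nat) \<Rightarrow> 'a mpoly" where
  "coefY r p \<alpha> = Lin (\<lambda>\<beta> c. if ypart r \<beta> = \<alpha> then sg (xpart r \<beta>) c else 0) p"

lemma coefY_single: "coefY r (sg \<beta> c) \<alpha> = (if ypart r \<beta> = \<alpha> then sg (xpart r \<beta>) c else 0)"
  unfolding coefY_def by (rule Lin_single) simp
lemma coefY_add: "coefY r (p + q) \<alpha> = coefY r p \<alpha> + coefY r q \<alpha>"
  unfolding coefY_def by (rule Lin_add) (auto simp: single_add)
lemma coefY_zero[simp]: "coefY r 0 \<alpha> = 0" by (simp add: coefY_def)
lemma coefY_uminus: "coefY r (- p) \<alpha> = - coefY r p \<alpha>"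
proof -
  have "coefY r p \<alpha> + coefY r (- p) \<alpha> = 0" using coefY_add[of r p "-p" \<alpha>] by simp
  then show ?thesis by (rule minus_unique[symmetric])
qed
lemma coefY_diff: "coefY r (p - q) \<alpha> = coefY r p \<alpha> - coefY r q \<alpha>"
  using coefY_add[of r p "-q"] coefY_uminus[of r q] by simp
lemma coefY_sum: "coefY r (sum f S) \<alpha> = (\<Sum>s\<in>S. coefY r (f s) \<alpha>)"
  by (induction S rule: infinite_finite_induct) (auto simp: coefY_add)

lemma XO_coefY: "XO r (coefY r p \<alpha>)"
proof -
  have "ks (coefY r p \<alpha>) \<subseteq> (\<Union>\<beta>\<in>ks p. ks (if ypart r \<beta> = \<alpha> then sg (xpart r \<beta>) (lk p \<beta>) else 0))"
    unfolding coefY_def Lin_def by (rule keys_sum)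
  also have "\<dots> \<subseteq> {\<gamma>. xo r \<gamma>}" by (auto simp: xo_of_xpart split: if_splits)
  finally show ?thesis by (auto simp: XO_def)
qed

lemma coefY_mult_single:
  assumes "xo r \<gamma>"
  shows "coefY r (sg \<gamma> x * p) \<alpha> = sg \<gamma> x * coefY r p \<alpha>"
proof (induction p rule: poly_induct)
  case (single \<beta> y)
  have "ypart r (\<gamma> + \<beta>) = ypart r \<beta>" "xpart r (\<gamma> + \<beta>) = \<gamma> + xpart r \<beta>"
    using assms by (simp_all add: ypart_add xpart_add xo_ypart xo_xpart)
  then show ?case by (simp add: mult_single coefY_single)
next
  case (add p q) then show ?case by (simp add: distrib_left coefY_add)
qed simp

lemma coefY_multX:
  assumes "XO r c"
  shows "coefY r (c * p) \<alpha> = c * coefY r p \<alpha>"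
proof -
  have "coefY r (c * p) \<alpha> = coefY r (\<Sum>\<gamma>\<in>ks c. sg \<gamma> (lk c \<gamma>) * p) \<alpha>"
    by (subst poly_sum_single[of c]) (simp add: sum_distrib_right)
  also have "\<dots> = (\<Sum>\<gamma>\<in>ks c. sg \<gamma> (lk c \<gamma>) * coefY r p \<alpha>)"
    using assms by (simp add: coefY_sum coefY_mult_single XO_def)
  also have "\<dots> = c * coefY r p \<alpha>"
    by (subst (2) poly_sum_single[of c]) (simp add: sum_distrib_right)
  finally show ?thesis .
qed

lemma coefY_Ymon: "yo r \<alpha>' \<Longrightarrow> coefY r (sg \<alpha>' 1) \<alpha> = (if \<alpha>' = \<alpha> then 1 else 0)"
  by (cases "\<alpha>' = \<alpha>") (auto simp: coefY_single yo_xpart yo_ypart)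

lemma coefY_XO: "XO r c \<Longrightarrow> coefY r c \<alpha> = (if \<alpha> = 0 then c else 0)"
proof -
  assume c: "XO r c"
  have "coefY r c \<alpha> = c * coefY r (sg 0 1) \<alpha>" using coefY_multX[OF c, of "sg 0 1" \<alpha>] by simp
  also have "coefY r (sg 0 1) \<alpha> = (if 0 = \<alpha> then 1 else 0)" by (rule coefY_Ymon) (rule yo_0)
  finally show ?thesis by auto
qed

definition Yk :: "nat \<Rightarrow> 'a::zero mpoly \<Rightarrow> (nat \<Rightarrow>\<^sub>0 nat) set" where
  "Yk r p = ypart r ` ks p"

lemma finite_Yk[simp]: "finite (Yk r p)" by (simp add: Yk_def)
lemma yo_Yk: "\<alpha> \<in> Yk r p \<Longrightarrow> yo r \<alpha>" by (auto simp: Yk_def yo_of_ypart)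

lemma coefY_notin: "\<alpha> \<notin> Yk r p \<Longrightarrow> coefY r p \<alpha> = 0"
  unfolding coefY_def Lin_def Yk_def by (rule sum.neutral) auto

lemma recon: "p = (\<Sum>\<alpha>\<in>Yk r p. coefY r p \<alpha> * sg \<alpha> 1)"
proof -
  have "(\<Sum>\<alpha>\<in>Yk r p. coefY r p \<alpha> * sg \<alpha> 1) =
     (\<Sum>\<alpha>\<in>Yk r p. \<Sum>\<beta>\<in>ks p. (if ypart r \<beta> = \<alpha> then sg (xpart r \<beta> + \<alpha>) (lk p \<beta>) else 0))"
    unfolding coefY_def Lin_def sum_distrib_right
  proof (intro sum.cong refl)
    fix \<alpha> \<beta>
    show "(if ypart r \<beta> = \<alpha> then sg (xpart r \<beta>) (lk p \<beta>) else 0) * sg \<alpha> 1 =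
       (if ypart r \<beta> = \<alpha> then sg (xpart r \<beta> + \<alpha>) (lk p \<beta>) else 0)"
      by (simp add: mult_single)
  qed
  also have "\<dots> = (\<Sum>\<beta>\<in>ks p. \<Sum>\<alpha>\<in>Yk r p. (if ypart r \<beta> = \<alpha> then sg (xpart r \<beta> + \<alpha>) (lk p \<beta>) else 0))"
    by (rule sum.swap)
  also have "\<dots> = (\<Sum>\<beta>\<in>ks p. sg \<beta> (lk p \<beta>))"
  proof (rule sum.cong[OF refl])
    fix \<beta> assume "\<beta> \<in> ks p"
    then have "ypart r \<beta> \<in> Yk r p" by (simp add: Yk_def)
    then have "(\<Sum>\<alpha>\<in>Yk r p. (if ypart r \<beta> = \<alpha> then sg (xpart r \<beta> + \<alpha>) (lk p \<beta>) else 0))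
        = sg (xpart r \<beta> + ypart r \<beta>) (lk p \<beta>)"
      by (simp add: sum.delta)
    then show "(\<Sum>\<alpha>\<in>Yk r p. (if ypart r \<beta> = \<alpha> then sg (xpart r \<beta> + \<alpha>) (lk p \<beta>) else 0)) = sg \<beta> (lk p \<beta>)"
      by (simp add: xy_decomp)
  qed
  also have "\<dots> = p" by (rule poly_sum_single[symmetric])
  finally show ?thesis ..
qed

lemma coefY_prod:
  "coefY r (p * q) \<alpha> =
    (\<Sum>\<alpha>1\<in>Yk r p. \<Sum>\<alpha>2\<in>Yk r q. if \<alpha>1 + \<alpha>2 = \<alpha> then coefY r p \<alpha>1 * coefY r q \<alpha>2 else 0)"
proof -
  have "p * q = (\<Sum>\<alpha>1\<in>Yk r p. \<Sum>\<alpha>2\<in>Yk r q. (coefY r p \<alpha>1 * coefY r q \<alpha>2) * sg (\<alpha>1 + \<alpha>2) 1)"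
  proof -
    have "p * q = (\<Sum>\<alpha>1\<in>Yk r p. coefY r p \<alpha>1 * sg \<alpha>1 1) * (\<Sum>\<alpha>2\<in>Yk r q. coefY r q \<alpha>2 * sg \<alpha>2 1)"
      using recon[of p r] recon[of q r] by simp
    also have "\<dots> = (\<Sum>\<alpha>1\<in>Yk r p. \<Sum>\<alpha>2\<in>Yk r q. (coefY r p \<alpha>1 * sg \<alpha>1 1) * (coefY r q \<alpha>2 * sg \<alpha>2 1))"
      by (rule sum_product)
    also have "\<dots> = (\<Sum>\<alpha>1\<in>Yk r p. \<Sum>\<alpha>2\<in>Yk r q. (coefY r p \<alpha>1 * coefY r q \<alpha>2) * sg (\<alpha>1 + \<alpha>2) 1)"
    proof (intro sum.cong refl)
      fix \<alpha>1 \<alpha>2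
      have "(coefY r p \<alpha>1 * sg \<alpha>1 1) * (coefY r q \<alpha>2 * sg \<alpha>2 1) =
          (coefY r p \<alpha>1 * coefY r q \<alpha>2) * (sg \<alpha>1 1 * sg \<alpha>2 1)" by (simp only: ac_simps)
      then show "(coefY r p \<alpha>1 * sg \<alpha>1 1) * (coefY r q \<alpha>2 * sg \<alpha>2 1) =
          (coefY r p \<alpha>1 * coefY r q \<alpha>2) * sg (\<alpha>1 + \<alpha>2) 1" by (simp add: mult_single)
    qed
    finally show ?thesis .
  qed
  then have "coefY r (p * q) \<alpha> =
     (\<Sum>\<alpha>1\<in>Yk r p. \<Sum>\<alpha>2\<in>Yk r q. coefY r ((coefY r p \<alpha>1 * coefY r q \<alpha>2) * sg (\<alpha>1 + \<alpha>2) 1) \<alpha>)"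
    by (simp add: coefY_sum)
  also have "\<dots> = (\<Sum>\<alpha>1\<in>Yk r p. \<Sum>\<alpha>2\<in>Yk r q. if \<alpha>1 + \<alpha>2 = \<alpha> then coefY r p \<alpha>1 * coefY r q \<alpha>2 else 0)"
  proof (intro sum.cong refl)
    fix \<alpha>1 \<alpha>2 assume "\<alpha>1 \<in> Yk r p" "\<alpha>2 \<in> Yk r q"
    then have "yo r (\<alpha>1 + \<alpha>2)" by (intro yo_add yo_Yk)
    moreover have "XO r (coefY r p \<alpha>1 * coefY r q \<alpha>2)" by (intro XO_mult XO_coefY)
    ultimately show "coefY r ((coefY r p \<alpha>1 * coefY r q \<alpha>2) * sg (\<alpha>1 + \<alpha>2) 1) \<alpha> =
        (if \<alpha>1 + \<alpha>2 = \<alpha> then coefY r p \<alpha>1 * coefY r q \<alpha>2 else 0)"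
      by (simp add: coefY_multX coefY_Ymon)
  qed
  finally show ?thesis .
qed

context nfl
begin

lemma coefY_I: "p \<in> I \<Longrightarrow> coefY r p \<alpha> \<in> I"
proof -
  let ?S = "{p. \<forall>\<alpha>. coefY r p \<alpha> \<in> I}"
  have "is_ideal ?S"
    unfolding is_ideal_def
  proof (intro conjI ballI allI)
    show "0 \<in> ?S" by (simp add: ideal_0[OF I_ideal])
  next
    fix x y assume "x \<in> ?S" "y \<in> ?S"
    then show "x + y \<in> ?S" by (simp add: coefY_add ideal_add[OF I_ideal])
  next
    fix x h assume x: "x \<in> ?S"
    show "h * x \<in> ?S"
    proof
      show "\<forall>\<alpha>. coefY r (h * x) \<alpha> \<in> I"
      proof
        fix \<alpha>
        show "coefY r (h * x) \<alpha> \<in> I"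
          unfolding coefY_prod
        proof (intro ideal_sum[OF I_ideal])
          fix \<alpha>1 \<alpha>2
          have "coefY r h \<alpha>1 * coefY r x \<alpha>2 \<in> I" using x by (simp add: ideal_multL[OF I_ideal])
          then show "(if \<alpha>1 + \<alpha>2 = \<alpha> then coefY r h \<alpha>1 * coefY r x \<alpha>2 else 0) \<in> I"
            using ideal_0[OF I_ideal] by simp
        qed
      qed
    qed
  qed
  moreover have "(\<lambda>i. embed_var i (tp i)) ` {1..r} \<subseteq> ?S"
  proof
    fix g assume "g \<in> (\<lambda>i. embed_var i (tp i)) ` {1..r}"
    then obtain i where i: "i \<in> {1..r}" "g = embed_var i (tp i)" by blast
    have "coefY r g \<alpha> \<in> I" for \<alpha>
      using i gen_in_I[OF i(1)] ideal_0[OF I_ideal] by (simp add: coefY_XO XO_E)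
    then show "g \<in> ?S" by blast
  qed
  ultimately have "I \<subseteq> ?S" unfolding I_def by (rule gen_ideal_least)
  then show "p \<in> I \<Longrightarrow> coefY r p \<alpha> \<in> I" by auto
qed

lemma coefY_I_rev:
  assumes h: "\<And>\<alpha>. \<alpha> \<in> Yk r p \<Longrightarrow> coefY r p \<alpha> \<in> I"
  shows "p \<in> I"
proof -
  have "(\<Sum>\<alpha>\<in>Yk r p. coefY r p \<alpha> * sg \<alpha> 1) \<in> I"
    by (rule ideal_sum[OF I_ideal], rule ideal_multR[OF I_ideal], rule h)
  then show ?thesis by (simp only: recon[of p r, symmetric])
qed

end


lemma zero_le_pm: "(0::nat \<Rightarrow>\<^sub>0 nat) \<le> \<alpha>"
proof (cases "\<alpha> = 0")
  case False
  then obtain k where k: "lk \<alpha> k \<noteq> 0" by (metis poly_mapping_eqI lookup_zero)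
  define k0 where "k0 = (LEAST k. lk \<alpha> k \<noteq> 0)"
  have "lk \<alpha> k0 \<noteq> 0" unfolding k0_def by (rule LeastI[of _ k]) (rule k)
  moreover have "\<And>k'. k' < k0 \<Longrightarrow> lk \<alpha> k' = 0" unfolding k0_def using not_less_Least by blast
  ultimately have "less_fun (lk 0) (lk \<alpha>)"
    by (intro less_funI exI[of _ k0]) auto
  then have "0 < \<alpha>" by (simp add: less_poly_mapping.rep_eq)
  then show ?thesis by simp
qed simp

locale ringl = nfl r tp I for r and tp :: "nat \<Rightarrow> 'a::{comm_ring_1,finite} poly" and I
begin

definition eqv :: "'a mpoly \<Rightarrow> 'a mpoly \<Rightarrow> bool" (infix "\<approx>" 50) where
  "p \<approx> q \<longleftrightarrow> p - q \<in> I"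

lemma eqv_refl[simp, intro]: "p \<approx> p" by (simp add: eqv_def ideal_0[OF I_ideal])
lemma eqv_sym: "p \<approx> q \<Longrightarrow> q \<approx> p"
  unfolding eqv_def using ideal_uminus[OF I_ideal, of "p - q"] by simp
lemma eqv_trans[trans]: "p \<approx> q \<Longrightarrow> q \<approx> s \<Longrightarrow> p \<approx> s"
  unfolding eqv_def using ideal_add[OF I_ideal, of "p - q" "q - s"] by simp
lemma eqv_add: "p \<approx> q \<Longrightarrow> p' \<approx> q' \<Longrightarrow> p + p' \<approx> q + q'"
  unfolding eqv_def using ideal_add[OF I_ideal, of "p - q" "p' - q'"] by (simp add: algebra_simps)
lemma eqv_uminus: "p \<approx> q \<Longrightarrow> - p \<approx> - q"
  unfolding eqv_def using ideal_uminus[OF I_ideal, of "p - q"] by simp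
lemma eqv_diff: "p \<approx> q \<Longrightarrow> p' \<approx> q' \<Longrightarrow> p - p' \<approx> q - q'"
  using eqv_add[of p q "-p'" "-q'"] eqv_uminus[of p' q'] by simp
lemma eqv_multL: "p \<approx> q \<Longrightarrow> c * p \<approx> c * q"
  unfolding eqv_def using ideal_multL[OF I_ideal, of "p - q" c] by (simp add: algebra_simps)
lemma eqv_multR: "p \<approx> q \<Longrightarrow> p * c \<approx> q * c"
  using eqv_multL[of p q c] by (simp add: mult.commute)
lemma eqv_mult: "p \<approx> q \<Longrightarrow> p' \<approx> q' \<Longrightarrow> p * p' \<approx> q * q'"
  using eqv_multR[of p q p'] eqv_multL[of p' q' q] eqv_trans by blast
lemma eqv_pow: "p \<approx> q \<Longrightarrow> p ^ n \<approx> q ^ n"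
  by (induction n) (auto intro: eqv_mult)
lemma eqv_I: "p \<in> I \<Longrightarrow> p \<approx> 0" by (simp add: eqv_def)
lemma eqv_0: "p \<approx> 0 \<Longrightarrow> p \<in> I" by (simp add: eqv_def)
lemma eqv_in: "p \<approx> q \<Longrightarrow> q \<in> I \<Longrightarrow> p \<in> I"
  using eqv_0 eqv_I eqv_trans by blast
lemma eqv_eq: "p = q \<Longrightarrow> p \<approx> q" by simp

lemma in_I_multL: "p \<in> I \<Longrightarrow> c * p \<in> I" by (rule ideal_multL[OF I_ideal])
lemma in_I_multR: "p \<in> I \<Longrightarrow> p * c \<in> I" by (rule ideal_multR[OF I_ideal])

definition Bs :: "'a mpoly set" where "Bs = {p. ks p \<subseteq> basis_monos r tp}"

lemma finite_Bs: "finite Bs" unfolding Bs_def by (rule finite_Bset)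

lemma nf_Bs: "XO r f \<Longrightarrow> nf f \<in> Bs" using nf_basis by (simp add: Bs_def)
lemma nf_eqv: "XO r f \<Longrightarrow> f \<approx> nf f" using nf_cong by (simp add: eqv_def)
lemma XO_nf: "XO r f \<Longrightarrow> XO r (nf f)" using nf_basis XO_basis by blast

lemma pow_idem:
  assumes "XO r s"
  shows "\<exists>n\<ge>1. s ^ (n + n) \<approx> s ^ n"
proof -
  let ?f = "\<lambda>k. nf (s ^ Suc k)"
  let ?N = "card Bs"
  have "?f ` {..?N} \<subseteq> Bs"
    by (rule image_subsetI) (rule nf_Bs[OF XO_pow[OF assms]])
  then have "card (?f ` {..?N}) \<le> ?N" by (rule card_mono[OF finite_Bs])
  then have "card (?f ` {..?N}) < card {..?N}" by simp
  then have "\<not> inj_on ?f {..?N}" by (rule pigeonhole)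
  then obtain i j where ij: "i \<noteq> j" "?f i = ?f j" by (auto simp: inj_on_def)
  have key: "\<And>i j. i < j \<Longrightarrow> ?f i = ?f j \<Longrightarrow> \<exists>n\<ge>1. s ^ (n + n) \<approx> s ^ n"
  proof -
    fix i j :: nat assume ij: "i < j" "?f i = ?f j"
    define a where "a = Suc i"
    define p where "p = j - i"
    have p1: "p \<ge> 1" using ij by (simp add: p_def)
    have "s ^ a \<approx> nf (s ^ a)" unfolding a_def by (rule nf_eqv[OF XO_pow[OF assms]])
    also have "nf (s ^ a) = nf (s ^ (a + p))" using ij by (simp add: a_def p_def)
    also have "nf (s ^ (a + p)) \<approx> s ^ (a + p)" by (rule eqv_sym, rule nf_eqv[OF XO_pow[OF assms]])
    finally have base: "s ^ a \<approx> s ^ (a + p)" .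
    have step: "s ^ (a + l) \<approx> s ^ (a + l + p)" for l
      using eqv_multR[OF base, of "s ^ l"] by (simp add: power_add[symmetric] ac_simps)
    have iter: "s ^ (a + l) \<approx> s ^ (a + l + c * p)" for l c
    proof (induction c)
      case (Suc c)
      have "s ^ (a + l + c * p) \<approx> s ^ (a + l + c * p + p)"
        using step[of "l + c * p"] by (simp add: ac_simps)
      then show ?case using Suc.IH eqv_trans by (simp add: ac_simps)
    qed simp
    define n where "n = a * p"
    have na: "n \<ge> a" using p1 by (simp add: n_def)
    have "s ^ (a + (n - a)) \<approx> s ^ (a + (n - a) + a * p)" by (rule iter)
    then have "s ^ n \<approx> s ^ (n + n)" using na by (simp add: n_def)
    moreover have "n \<ge> 1" using p1 by (simp add: n_def a_def)
    ultimately show "\<exists>n\<ge>1. s ^ (n + n) \<approx> s ^ n" using eqv_sym by blast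
  qed
  show ?thesis
  proof (cases "i < j")
    case True then show ?thesis using key ij by blast
  next
    case False then have "j < i" using ij by simp
    then show ?thesis using key ij by metis
  qed
qed

definition idem :: "'a mpoly \<Rightarrow> bool" where "idem u \<longleftrightarrow> XO r u \<and> u * u \<approx> u"
definition nilp :: "'a mpoly \<Rightarrow> bool" where "nilp s \<longleftrightarrow> (\<exists>n. s ^ n \<in> I)"
definition primitive :: "'a mpoly \<Rightarrow> bool" where
  "primitive u \<longleftrightarrow> (\<forall>w. XO r w \<and> w * w \<approx> w \<and> w * u \<approx> w \<longrightarrow> w \<in> I \<or> w \<approx> u)"

lemma dichotomy:
  assumes u: "idem u" "primitive u" and s: "XO r s" "u * s \<approx> s"
  shows "(\<exists>v. XO r v \<and> s * v \<approx> u) \<or> nilp s"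
proof -
  obtain n where n: "n \<ge> 1" "s ^ (n + n) \<approx> s ^ n" using pow_idem[OF s(1)] by blast
  let ?e = "s ^ n"
  have eXO: "XO r ?e" using XO_pow[OF s(1)] .
  have ee: "?e * ?e \<approx> ?e" using n(2) by (simp add: power_add[symmetric])
  have sn: "s ^ n = s ^ (n - 1) * s" using power_minus_mult[of n s] n(1) by simp
  have "?e * u = s ^ (n - 1) * (u * s)" unfolding sn by (simp only: ac_simps)
  also have "\<dots> \<approx> s ^ (n - 1) * s" by (rule eqv_multL[OF s(2)])
  also have "s ^ (n - 1) * s = ?e" using sn by simp
  finally have eu: "?e * u \<approx> ?e" .
  from u(2) eXO ee eu have "?e \<in> I \<or> ?e \<approx> u" unfolding primitive_def by blast
  then show ?thesis
  proof
    assume "?e \<in> I" then show ?thesis unfolding nilp_def by blast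
  next
    assume "?e \<approx> u"
    then have "s * s ^ (n - 1) \<approx> u" unfolding sn by (simp only: mult.commute)
    then show ?thesis using XO_pow[OF s(1), of "n - 1"] by blast
  qed
qed

lemma nilp_add:
  assumes "p ^ n \<in> I" "q ^ m \<in> I"
  shows "(p + q) ^ (n + m) \<in> I"
proof -
  have "(p + q) ^ (n + m) = (\<Sum>k\<le>n + m. of_nat ((n + m) choose k) * p ^ k * q ^ (n + m - k))"
    by (rule binomial_ring)
  also have "\<dots> \<in> I"
  proof (rule ideal_sum[OF I_ideal])
    fix k assume "k \<in> {..n + m}"
    show "of_nat ((n + m) choose k) * p ^ k * q ^ (n + m - k) \<in> I"
    proof (cases "k \<ge> n")
      case True
      have "p ^ k = p ^ n * p ^ (k - n)" using power_add[of p n "k - n"] True by simp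
      then have "of_nat ((n + m) choose k) * p ^ k * q ^ (n + m - k) =
          (of_nat ((n + m) choose k) * p ^ (k - n) * q ^ (n + m - k)) * p ^ n"
        by (simp only: ac_simps)
      then show ?thesis using in_I_multL[OF assms(1)] by simp
    next
      case False
      have e: "m + (n + m - k - m) = n + m - k" using False by simp
      have "q ^ (n + m - k) = q ^ m * q ^ (n + m - k - m)"
        using power_add[of q m "n + m - k - m"] unfolding e by simp
      then have "of_nat ((n + m) choose k) * p ^ k * q ^ (n + m - k) =
          (of_nat ((n + m) choose k) * p ^ k * q ^ (n + m - k - m)) * q ^ m"
        by (simp only: ac_simps)
      then show ?thesis using in_I_multL[OF assms(2)] by simp
    qed
  qed
  finally show ?thesis .
qed

lemma nilp_sum: "finite S \<Longrightarrow> (\<And>i. i \<in> S \<Longrightarrow> nilp (f i)) \<Longrightarrow> nilp (sum f S)"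
proof (induction S rule: finite_induct)
  case empty then show ?case using ideal_0[OF I_ideal] by (auto simp: nilp_def intro: exI[of _ 1])
next
  case (insert x F)
  have a: "nilp (f x)" using insert.prems by auto
  have b: "nilp (sum f F)" using insert.IH insert.prems by auto
  obtain n where n: "f x ^ n \<in> I" using a by (auto simp: nilp_def)
  obtain m where m: "sum f F ^ m \<in> I" using b by (auto simp: nilp_def)
  have "(f x + sum f F) ^ (n + m) \<in> I" by (rule nilp_add[OF n m])
  then show ?case using insert.hyps by (auto simp: nilp_def)
qed

lemma nilp_pow_ge: "s ^ n \<in> I \<Longrightarrow> n \<le> k \<Longrightarrow> s ^ k \<in> I"
proof -
  assume "s ^ n \<in> I" "n \<le> k"
  then have "s ^ n * s ^ (k - n) \<in> I" using in_I_multR by blast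
  then show ?thesis using power_add[of s n "k - n"] \<open>n \<le> k\<close> by simp
qed

lemma kill:
  assumes "finite T" "\<And>t. t \<in> T \<Longrightarrow> XO r t \<and> nilp t" "XO r z0" "z0 * w \<notin> I"
  shows "\<exists>c. XO r c \<and> z0 * c * w \<notin> I \<and> (\<forall>t\<in>T. z0 * c * t * w \<in> I)"
  using assms
proof (induction T rule: finite_induct)
  case empty then show ?case by (auto intro: exI[of _ 1])
next
  case (insert t T)
  then obtain c where c: "XO r c" "z0 * c * w \<notin> I" "\<forall>t'\<in>T. z0 * c * t' * w \<in> I" by auto
  from insert.prems(1) obtain N where N: "t ^ N \<in> I" "XO r t" by (auto simp: nilp_def)
  let ?S = "{k. z0 * c * t ^ k * w \<notin> I}"
  have "0 \<in> ?S" using c by simp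
  have bnd: "?S \<subseteq> {..N}"
  proof
    fix k assume "k \<in> ?S"
    show "k \<in> {..N}"
    proof (rule ccontr)
      assume "k \<notin> {..N}"
      then have "t ^ k \<in> I" using nilp_pow_ge[OF N(1)] by simp
      then have "z0 * c * t ^ k * w \<in> I" by (simp add: in_I_multL in_I_multR mult.assoc)
      with \<open>k \<in> ?S\<close> show False by simp
    qed
  qed
  then have fin: "finite ?S" by (rule finite_subset) simp
  define k where "k = Max ?S"
  have ne: "?S \<noteq> {}" using \<open>0 \<in> ?S\<close> by blast
  have kS: "k \<in> ?S" unfolding k_def by (rule Max_in[OF fin ne])
  have "Suc k \<notin> ?S" using Max_ge[OF fin, of "Suc k"] by (auto simp: k_def)
  then have tk: "z0 * c * t ^ Suc k * w \<in> I" by simp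
  define c' where "c' = c * t ^ k"
  have "XO r c'" unfolding c'_def using c(1) N(2) by (intro XO_mult XO_pow)
  moreover have "z0 * c' * w \<notin> I" using kS by (simp add: c'_def mult.assoc)
  moreover have "\<forall>t'\<in>insert t T. z0 * c' * t' * w \<in> I"
  proof
    fix t' assume "t' \<in> insert t T"
    then show "z0 * c' * t' * w \<in> I"
    proof
      assume "t' = t" then show ?thesis using tk by (simp add: c'_def ac_simps)
    next
      assume "t' \<in> T"
      then have "z0 * c * t' * w \<in> I" using c(3) by blast
      then have "t ^ k * (z0 * c * t' * w) \<in> I" by (rule in_I_multL)
      then show ?thesis by (simp add: c'_def ac_simps)
    qed
  qed
  ultimately show ?case by blast
qed

end


context ringl
begin

lemma eqv_sum: "(\<And>i. i \<in> S \<Longrightarrow> f i \<approx> g i) \<Longrightarrow> sum f S \<approx> sum g S"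
  by (induction S rule: infinite_finite_induct) (auto intro: eqv_add)

lemma idem_mult_eqv: "u * u \<approx> u \<Longrightarrow> u * (u * x) \<approx> u * x"
  using eqv_multR[of "u*u" u x] by (simp add: mult.assoc)

lemma nilp_mult: "nilp s \<Longrightarrow> nilp (s * c)"
  unfolding nilp_def by (auto simp: power_mult_distrib intro: in_I_multR)

end

locale mainl = ringl r tp I for r tp I +
  fixes G0 G1 :: "'a::{comm_ring_1,finite} mpoly"
  assumes annI: "\<And>f. f * G0 \<in> I \<Longrightarrow> f * G1 \<in> I \<Longrightarrow> f \<in> I"
    and G01: "G0 * G1 \<in> I"
begin

lemma loc:
  assumes u: "idem u" "primitive u" and m: "XO r m" "m \<notin> I" "u * m \<approx> m" "m \<approx> G1 * f"
  shows "\<exists>h. u * G1 * h \<approx> u"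
proof -
  have uXO: "XO r u" and uu: "u * u \<approx> u" using u(1) by (auto simp: idem_def)
  have mG0: "m * G0 \<in> I"
  proof -
    have "m * G0 \<approx> G1 * f * G0" by (rule eqv_multR[OF m(4)])
    moreover have "G1 * f * G0 \<in> I" using in_I_multR[OF G01, of f] by (simp add: ac_simps)
    ultimately show ?thesis by (rule eqv_in)
  qed
  define g where "g = u * G1"
  define F where "F = u * f"
  have gF: "g * F \<approx> m"
  proof -
    have "g * F = (u * u) * (G1 * f)" by (simp add: g_def F_def ac_simps)
    also have "\<dots> \<approx> u * (G1 * f)" by (rule eqv_multR[OF uu])
    also have "\<dots> \<approx> u * m" by (rule eqv_multL[OF eqv_sym[OF m(4)]])
    also have "\<dots> \<approx> m" by (rule m(3))
    finally show ?thesis .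
  qed
  have FnI: "F \<notin> I"
  proof
    assume "F \<in> I"
    then have "g * F \<in> I" by (rule in_I_multL)
    then have "m \<in> I" using eqv_in[OF eqv_sym[OF gF]] by blast
    with m(2) show False by simp
  qed
  define cg where "cg \<alpha> = coefY r g \<alpha>" for \<alpha>
  define cF where "cF \<beta> = coefY r F \<beta>" for \<beta>
  have cg_eq: "cg \<alpha> = u * coefY r G1 \<alpha>" for \<alpha> unfolding cg_def g_def by (rule coefY_multX[OF uXO])
  have cF_eq: "cF \<beta> = u * coefY r f \<beta>" for \<beta> unfolding cF_def F_def by (rule coefY_multX[OF uXO])
  have cgXO: "XO r (cg \<alpha>)" for \<alpha> unfolding cg_def by (rule XO_coefY)
  have cFXO: "XO r (cF \<beta>)" for \<beta> unfolding cF_def by (rule XO_coefY)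
  have ucg: "u * cg \<alpha> \<approx> cg \<alpha>" for \<alpha> unfolding cg_eq by (rule idem_mult_eqv[OF uu])
  have ucF: "u * cF \<beta> \<approx> cF \<beta>" for \<beta> unfolding cF_eq by (rule idem_mult_eqv[OF uu])
  define U where "U = {\<alpha> \<in> Yk r g. \<exists>v. XO r v \<and> cg \<alpha> * v \<approx> u}"
  have nilU: "nilp (cg \<alpha>)" if "\<alpha> \<notin> U" "\<alpha> \<in> Yk r g" for \<alpha>
    using dichotomy[OF u cgXO ucg, of \<alpha>] that by (auto simp: U_def)
  have finU: "finite U" unfolding U_def by simp
  show ?thesis
  proof (cases "U = {}")
    case True
    let ?T = "cg ` Yk r g"
    have T: "XO r t \<and> nilp t" if "t \<in> ?T" for t
      using that nilU True cgXO by auto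
    have m1: "m * 1 \<notin> I" using m(2) by simp
    have finT: "finite ?T" by simp
    from kill[where T="?T", OF finT T m(1) m1] obtain c where
      c: "XO r c" "m * c * 1 \<notin> I" "\<forall>t\<in>?T. m * c * t * 1 \<in> I"
      by blast
    define z where "z = m * c"
    have zXO: "XO r z" unfolding z_def using m(1) c(1) by (rule XO_mult)
    have zg: "z * g \<in> I"
    proof (rule coefY_I_rev)
      fix \<alpha>
      have "coefY r (z * g) \<alpha> = z * cg \<alpha>" unfolding cg_def by (rule coefY_multX[OF zXO])
      moreover have "z * cg \<alpha> \<in> I"
      proof (cases "\<alpha> \<in> Yk r g")
        case True then show ?thesis using c(3) by (simp add: z_def)
      next
        case False then show ?thesis by (simp add: cg_def coefY_notin ideal_0[OF I_ideal])
      qed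
      ultimately show "coefY r (z * g) \<alpha> \<in> I" by simp
    qed
    have "z * G1 \<approx> (u * z) * G1"
    proof -
      have "u * z = (u * m) * c" by (simp add: z_def ac_simps)
      also have "\<dots> \<approx> m * c" by (rule eqv_multR[OF m(3)])
      finally have "u * z \<approx> z" by (simp add: z_def)
      then show ?thesis by (rule eqv_multR[OF eqv_sym])
    qed
    moreover have "(u * z) * G1 = z * g" by (simp add: g_def ac_simps)
    ultimately have "z * G1 \<in> I" using zg eqv_in by simp
    moreover have "z * G0 \<in> I" using in_I_multR[OF mG0, of c] by (simp add: z_def ac_simps)
    ultimately have "z \<in> I" using annI by blast
    with c(2) show ?thesis by (simp add: z_def)
  next
    case False
    define \<mu> where "\<mu> = Max U"
    have \<mu>U: "\<mu> \<in> U" unfolding \<mu>_def using finU False by (rule Max_in)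
    then obtain v where v: "XO r v" "cg \<mu> * v \<approx> u" by (auto simp: U_def)
    have \<mu>g: "\<mu> \<in> Yk r g" using \<mu>U by (simp add: U_def)
    have notU: "\<alpha> \<notin> U" if "\<mu> < \<alpha>" for \<alpha>
      using that Max_ge[OF finU, of \<alpha>] by (auto simp: \<mu>_def)
    show ?thesis
    proof (cases "\<mu> = 0")
      case True
      let ?S = "Yk r g - {0}"
      define N where "N = (\<Sum>\<alpha>\<in>?S. cg \<alpha> * sg \<alpha> 1)"
      have nN: "nilp N" unfolding N_def
      proof (rule nilp_sum)
        fix \<alpha> assume a: "\<alpha> \<in> ?S"
        have "0 < \<alpha>" using a zero_le_pm[of \<alpha>] by (auto simp: order.order_iff_strict)
        then have "\<alpha> \<notin> U" using notU True by simp
        then show "nilp (cg \<alpha> * sg \<alpha> 1)" using nilU a by (intro nilp_mult) auto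
      qed simp
      have g_split: "g = cg 0 + N"
      proof -
        have "g = (\<Sum>\<alpha>\<in>Yk r g. cg \<alpha> * sg \<alpha> 1)" unfolding cg_def by (rule recon)
        also have "\<dots> = cg 0 * sg 0 1 + N"
          unfolding N_def using \<mu>g True by (subst sum.remove[of _ 0]) auto
        finally show ?thesis by simp
      qed
      obtain n where wn: "(N * v) ^ n \<in> I" using nilp_mult[OF nN, of v] by (auto simp: nilp_def)
      define w where "w = N * v"
      have uN: "u * N \<approx> N"
      proof -
        have "u * g \<approx> g" unfolding g_def by (rule idem_mult_eqv[OF uu])
        then have "u * g - u * cg 0 \<approx> g - cg 0" using ucg[of 0] by (rule eqv_diff)
        moreover have "u * g - u * cg 0 = u * N" "g - cg 0 = N" using g_split by (simp_all add: algebra_simps)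
        ultimately show ?thesis by simp
      qed
      have uw: "u * w \<approx> w" unfolding w_def using eqv_multR[OF uN, of v] by (simp add: ac_simps)
      have wu: "w * u \<approx> w" using uw by (simp add: mult.commute)
      have gv: "g * v \<approx> u + w"
      proof -
        have "g * v = cg 0 * v + w" using g_split by (simp add: w_def algebra_simps)
        also have "\<dots> \<approx> u + w"
          using v(2) True by (intro eqv_add) auto
        finally show ?thesis .
      qed
      define S where "S = (\<Sum>i<n. (- w) ^ i)"
      have "g * (v * (u * S)) = (g * v) * (u * S)" by (simp add: ac_simps)
      also have "\<dots> \<approx> (u + w) * (u * S)" by (rule eqv_multR[OF gv])
      also have "(u + w) * (u * S) = (u * u + w * u) * S" by (simp add: algebra_simps)
      also have "\<dots> \<approx> (u + w) * S" by (intro eqv_multR eqv_add uu wu)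
      also have "(u + w) * S \<approx> (u + u * w) * S" by (intro eqv_multR eqv_add eqv_refl eqv_sym[OF uw])
      also have "(u + u * w) * S = u * ((1 - (- w)) * S)" by (simp add: algebra_simps)
      also have "\<dots> = u * (1 - (- w) ^ n)" unfolding S_def by (simp add: one_diff_power_eq)
      also have "\<dots> = u - u * (- w) ^ n" by (simp add: algebra_simps)
      also have "\<dots> \<approx> u - 0"
      proof (rule eqv_diff[OF eqv_refl])
        have "(- w) ^ n = (- 1) ^ n * w ^ n" by (simp add: power_mult_distrib[symmetric])
        then have "(- w) ^ n \<in> I" using wn in_I_multL by (simp add: w_def)
        then show "u * (- w) ^ n \<approx> 0" by (intro eqv_I in_I_multL)
      qed
      finally have "u * G1 * (v * (u * S)) \<approx> u" by (simp add: g_def)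
      then show ?thesis by blast
    next
      case False
      have \<mu>pos: "0 < \<mu>" using False zero_le_pm[of \<mu>] by (auto simp: order.order_iff_strict)
      let ?T = "cg ` {\<alpha> \<in> Yk r g. \<mu> < \<alpha>}"
      have T: "XO r t \<and> nilp t" if "t \<in> ?T" for t
        using that nilU notU cgXO by auto
      have uF: "u * F \<notin> I"
      proof
        assume "u * F \<in> I"
        moreover have "u * F \<approx> F" unfolding F_def by (rule idem_mult_eqv[OF uu])
        ultimately have "F \<in> I" using eqv_in[OF eqv_sym] by blast
        with FnI show False by simp
      qed
      have finT: "finite ?T" by simp
      from kill[where T="?T", OF finT T uXO uF] obtain c where
        c: "XO r c" "u * c * F \<notin> I" "\<forall>t\<in>?T. u * c * t * F \<in> I"
        by blast
      define z where "z = u * c"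
      have zXO: "XO r z" unfolding z_def using uXO c(1) by (rule XO_mult)
      have zF: "z * F \<notin> I" using c(2) by (simp add: z_def)
      define V where "V = {\<beta> \<in> Yk r F. z * cF \<beta> \<notin> I}"
      have finV: "finite V" unfolding V_def by simp
      have Vne: "V \<noteq> {}"
      proof
        assume V0: "V = {}"
        have "z * F \<in> I"
        proof (rule coefY_I_rev)
          fix \<beta>
          have "coefY r (z * F) \<beta> = z * cF \<beta>" unfolding cF_def by (rule coefY_multX[OF zXO])
          moreover have "z * cF \<beta> \<in> I"
          proof (cases "\<beta> \<in> Yk r F")
            case True then show ?thesis using V0 by (auto simp: V_def)
          next
            case False then show ?thesis by (simp add: cF_def coefY_notin ideal_0[OF I_ideal])
          qed
          ultimately show "coefY r (z * F) \<beta> \<in> I" by simp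
        qed
        with zF show False by simp
      qed
      define \<nu> where "\<nu> = Max V"
      have \<nu>V: "\<nu> \<in> V" unfolding \<nu>_def using finV Vne by (rule Max_in)
      have \<nu>F: "\<nu> \<in> Yk r F" and z\<nu>: "z * cF \<nu> \<notin> I" using \<nu>V by (auto simp: V_def)
      have big: "z * cF \<beta> \<in> I" if "\<beta> \<in> Yk r F" "\<nu> < \<beta>" for \<beta>
      proof (rule ccontr)
        assume "z * cF \<beta> \<notin> I"
        then have "\<beta> \<in> V" using that(1) by (simp add: V_def)
        then have "\<beta> \<le> \<nu>" unfolding \<nu>_def by (rule Max_ge[OF finV])
        with that(2) show False by simp
      qed
      have sum_pos: "\<mu> + \<nu> \<noteq> 0"
      proof -
        have "0 < \<mu> + \<nu>" using \<mu>pos zero_le_pm[of \<nu>] by (rule add_pos_nonneg)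
        then show ?thesis by simp
      qed
      have c1: "coefY r (z * (g * F)) (\<mu> + \<nu>) =
        (\<Sum>\<alpha>1\<in>Yk r g. \<Sum>\<alpha>2\<in>Yk r F. if \<alpha>1 + \<alpha>2 = \<mu> + \<nu> then z * cg \<alpha>1 * cF \<alpha>2 else 0)"
      proof -
        have "coefY r (z * (g * F)) (\<mu> + \<nu>) = z * coefY r (g * F) (\<mu> + \<nu>)" by (rule coefY_multX[OF zXO])
        also have "coefY r (g * F) (\<mu> + \<nu>) =
            (\<Sum>\<alpha>1\<in>Yk r g. \<Sum>\<alpha>2\<in>Yk r F. if \<alpha>1 + \<alpha>2 = \<mu> + \<nu> then cg \<alpha>1 * cF \<alpha>2 else 0)"
          unfolding cg_def cF_def by (rule coefY_prod)
        also have "z * (\<Sum>\<alpha>1\<in>Yk r g. \<Sum>\<alpha>2\<in>Yk r F. if \<alpha>1 + \<alpha>2 = \<mu> + \<nu> then cg \<alpha>1 * cF \<alpha>2 else 0)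
          = (\<Sum>\<alpha>1\<in>Yk r g. \<Sum>\<alpha>2\<in>Yk r F. if \<alpha>1 + \<alpha>2 = \<mu> + \<nu> then z * cg \<alpha>1 * cF \<alpha>2 else 0)"
          unfolding sum_distrib_left by (intro sum.cong refl) (simp add: mult.assoc)
        finally show ?thesis .
      qed
      have c2: "\<dots> \<approx> (\<Sum>\<alpha>1\<in>Yk r g. \<Sum>\<alpha>2\<in>Yk r F. if (\<alpha>1, \<alpha>2) = (\<mu>, \<nu>) then z * cg \<alpha>1 * cF \<alpha>2 else 0)"
      proof (intro eqv_sum)
        fix \<alpha>1 \<alpha>2 assume a1: "\<alpha>1 \<in> Yk r g" and a2: "\<alpha>2 \<in> Yk r F"
        show "(if \<alpha>1 + \<alpha>2 = \<mu> + \<nu> then z * cg \<alpha>1 * cF \<alpha>2 else 0) \<approx>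
              (if (\<alpha>1, \<alpha>2) = (\<mu>, \<nu>) then z * cg \<alpha>1 * cF \<alpha>2 else 0)"
        proof (cases "\<alpha>1 + \<alpha>2 = \<mu> + \<nu>")
          case False
          then show ?thesis by auto
        next
          case eq: True
          show ?thesis
          proof (cases "\<alpha>1 = \<mu>")
            case True
            then have "\<alpha>2 = \<nu>" using eq by simp
            then show ?thesis using True by simp
          next
            case ne: False
            have "z * cg \<alpha>1 * cF \<alpha>2 \<in> I"
            proof (cases "\<mu> < \<alpha>1")
              case True
              have "z * cg \<alpha>1 * F \<in> I" using c(3) a1 True by (simp add: z_def)
              then have "coefY r (z * cg \<alpha>1 * F) \<alpha>2 \<in> I" by (rule coefY_I)
              moreover have "coefY r (z * cg \<alpha>1 * F) \<alpha>2 = z * cg \<alpha>1 * cF \<alpha>2"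
                unfolding cF_def by (rule coefY_multX) (intro XO_mult zXO cgXO)
              ultimately show ?thesis by simp
            next
              case False
              then have lt: "\<alpha>1 < \<mu>" using ne by simp
              have "\<nu> < \<alpha>2"
              proof (rule ccontr)
                assume "\<not> \<nu> < \<alpha>2"
                then have "\<alpha>2 \<le> \<nu>" by simp
                then have "\<alpha>1 + \<alpha>2 < \<mu> + \<nu>" using lt by (rule add_less_le_mono[rotated])
                with eq show False by simp
              qed
              then have "z * cF \<alpha>2 \<in> I" using big a2 by blast
              then have "cg \<alpha>1 * (z * cF \<alpha>2) \<in> I" by (rule in_I_multL)
              then show ?thesis by (simp add: ac_simps)
            qed
            then show ?thesis using ne eq by (simp add: eqv_I)
          qed
        qed
      qed
      have c3: "(\<Sum>\<alpha>1\<in>Yk r g. \<Sum>\<alpha>2\<in>Yk r F. if (\<alpha>1, \<alpha>2) = (\<mu>, \<nu>) then z * cg \<alpha>1 * cF \<alpha>2 else 0)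
          = z * cg \<mu> * cF \<nu>"
      proof -
        have inner: "(\<Sum>\<alpha>2\<in>Yk r F. if (\<alpha>1, \<alpha>2) = (\<mu>, \<nu>) then z * cg \<alpha>1 * cF \<alpha>2 else 0)
            = (if \<alpha>1 = \<mu> then z * cg \<mu> * cF \<nu> else 0)" for \<alpha>1
        proof (cases "\<alpha>1 = \<mu>")
          case True then show ?thesis using \<nu>F by (simp add: sum.delta)
        qed simp
        show ?thesis unfolding inner using \<mu>g by (simp add: sum.delta)
      qed
      have "coefY r (z * (g * F)) (\<mu> + \<nu>) \<approx> z * cg \<mu> * cF \<nu>"
        using c1 c2 c3 by simp
      moreover have "coefY r (z * (g * F)) (\<mu> + \<nu>) \<in> I"
      proof -
        have "z * (g * F) \<approx> z * m" by (rule eqv_multL[OF gF])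
        then have "coefY r (z * (g * F) - z * m) (\<mu> + \<nu>) \<in> I" unfolding eqv_def by (rule coefY_I)
        moreover have "coefY r (z * m) (\<mu> + \<nu>) = 0"
          using sum_pos by (simp add: coefY_XO[OF XO_mult[OF zXO m(1)]])
        ultimately show ?thesis by (simp add: coefY_diff)
      qed
      ultimately have I1: "z * cg \<mu> * cF \<nu> \<in> I" using eqv_in[OF eqv_sym] by blast
      have "z * cF \<nu> \<approx> z * (u * cF \<nu>)" by (rule eqv_multL[OF eqv_sym[OF ucF]])
      also have "\<dots> \<approx> z * ((cg \<mu> * v) * cF \<nu>)" by (intro eqv_multL eqv_multR eqv_sym[OF v(2)])
      also have "z * ((cg \<mu> * v) * cF \<nu>) = v * (z * cg \<mu> * cF \<nu>)" by (simp add: ac_simps)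
      finally have "z * cF \<nu> \<in> I" using eqv_in in_I_multL[OF I1] by blast
      with z\<nu> show ?thesis by simp
    qed
  qed
qed

end


context mainl
begin

definition inK :: "'a mpoly \<Rightarrow> bool" where "inK x \<longleftrightarrow> (\<exists>f. x \<approx> G1 * f)"

definition Sub :: "'a mpoly \<Rightarrow> 'a mpoly set" where
  "Sub u = {w \<in> Bs. w * w \<approx> w \<and> w * u \<approx> w}"

lemma finite_Sub: "finite (Sub u)"
  unfolding Sub_def using finite_Bs by simp

lemma sub_psubset:
  assumes u: "idem u" and x: "idem x" "x * u \<approx> x" "\<not> x \<approx> u"
  shows "Sub x \<subset> Sub u"
proof
  show "Sub x \<subseteq> Sub u"
  proof
    fix y assume "y \<in> Sub x"
    then have y: "y \<in> Bs" "y * y \<approx> y" "y * x \<approx> y" by (auto simp: Sub_def)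
    have "y * u \<approx> (y * x) * u" by (rule eqv_multR[OF eqv_sym[OF y(3)]])
    also have "(y * x) * u = y * (x * u)" by (simp add: ac_simps)
    also have "\<dots> \<approx> y * x" by (rule eqv_multL[OF x(2)])
    also have "\<dots> \<approx> y" by (rule y(3))
    finally show "y \<in> Sub u" using y by (simp add: Sub_def)
  qed
next
  have uXO: "XO r u" and uu: "u * u \<approx> u" using u by (auto simp: idem_def)
  have nu: "u \<approx> nf u" by (rule nf_eqv[OF uXO])
  have "nf u * nf u \<approx> u * u" by (intro eqv_mult eqv_sym[OF nu])
  also have "\<dots> \<approx> u" by (rule uu)
  also have "\<dots> \<approx> nf u" by (rule nu)
  finally have a: "nf u * nf u \<approx> nf u" .
  have "nf u * u \<approx> u * u" by (intro eqv_mult eqv_sym[OF nu] eqv_refl)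
  also have "\<dots> \<approx> u" by (rule uu)
  also have "\<dots> \<approx> nf u" by (rule nu)
  finally have b: "nf u * u \<approx> nf u" .
  have inU: "nf u \<in> Sub u" using a b nf_Bs[OF uXO] by (simp add: Sub_def)
  have "nf u \<notin> Sub x"
  proof
    assume "nf u \<in> Sub x"
    then have "nf u * x \<approx> nf u" by (simp add: Sub_def)
    then have "u * x \<approx> u" using nu eqv_trans eqv_sym eqv_multR by meson
    then have "x \<approx> u" using x(2) eqv_trans eqv_sym by (metis mult.commute)
    with x(3) show False by simp
  qed
  with inU show "Sub x \<noteq> Sub u" by blast
qed

lemma in_I_eqv: "p \<in> I \<Longrightarrow> q \<in> I \<Longrightarrow> p \<approx> q"
  unfolding eqv_def by (rule ideal_diff[OF I_ideal])

lemma idem_gen: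
  assumes "idem u" "XO r m" "inK m" "u * m \<approx> m"
  shows "\<exists>e. idem e \<and> inK e \<and> e * m \<approx> m"
  using assms
proof (induction "card (Sub u)" arbitrary: u m rule: less_induct)
  case less
  have uXO: "XO r u" and uu: "u * u \<approx> u" using less.prems(1) by (auto simp: idem_def)
  obtain f where f: "m \<approx> G1 * f" using less.prems(3) by (auto simp: inK_def)
  show ?case
  proof (cases "primitive u")
    case True
    show ?thesis
    proof (cases "m \<in> I")
      case True
      have "idem 0" by (simp add: idem_def)
      moreover have "inK 0" unfolding inK_def by (rule exI[of _ 0]) simp
      moreover have "0 * m \<approx> m" using True by (simp add: in_I_eqv ideal_0[OF I_ideal])
      ultimately show ?thesis by blast
    next
      case False
      from loc[OF less.prems(1) \<open>primitive u\<close> less.prems(2) False less.prems(4) f]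
      obtain h where h: "u * G1 * h \<approx> u" by blast
      have "inK u" unfolding inK_def
        by (rule exI[of _ "u * h"]) (use eqv_sym[OF h] in \<open>simp add: ac_simps\<close>)
      then show ?thesis using less.prems(1,4) by blast
    qed
  next
    case False
    then obtain w where w: "XO r w" "w * w \<approx> w" "w * u \<approx> w" "w \<notin> I" "\<not> w \<approx> u"
      unfolding primitive_def by blast
    define w' where "w' = u - w"
    have iw: "idem w" using w by (simp add: idem_def)
    have w'XO: "XO r w'" unfolding w'_def using uXO w(1) by (rule XO_diff)
    have uw: "u * w \<approx> w" using w(3) by (simp add: mult.commute)
    have w'u: "w' * u \<approx> w'"
    proof -
      have "w' * u = u * u - w * u" by (simp add: w'_def algebra_simps)
      also have "\<dots> \<approx> u - w" by (rule eqv_diff[OF uu w(3)])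
      finally show ?thesis by (simp add: w'_def)
    qed
    have w'w': "w' * w' \<approx> w'"
    proof -
      have "w' * w' = u * u - u * w - w * u + w * w" by (simp add: w'_def algebra_simps)
      also have "\<dots> \<approx> u - w - w + w" by (intro eqv_add eqv_diff uu uw w(3) w(2))
      finally show ?thesis by (simp add: w'_def)
    qed
    have iw': "idem w'" using w'XO w'w' by (simp add: idem_def)
    have nw': "\<not> w' \<approx> u"
    proof
      assume "w' \<approx> u"
      then have "(u - w) - u \<in> I" by (simp add: eqv_def w'_def)
      then have "- w \<in> I" by simp
      then have "w \<in> I" using ideal_uminus[OF I_ideal, of "- w"] by simp
      with w(4) show False by simp
    qed
    have c1: "card (Sub w) < card (Sub u)"
      by (rule psubset_card_mono[OF finite_Sub sub_psubset[OF less.prems(1) iw w(3) w(5)]])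
    have c2: "card (Sub w') < card (Sub u)"
      by (rule psubset_card_mono[OF finite_Sub sub_psubset[OF less.prems(1) iw' w'u nw']])
    have inK_mult: "inK (x * m)" for x
      unfolding inK_def by (rule exI[of _ "x * f"]) (use eqv_multL[OF f, of x] in \<open>simp add: ac_simps\<close>)
    have "w * (w * m) \<approx> w * m" by (rule idem_mult_eqv[OF w(2)])
    from less.hyps[OF c1 iw XO_mult[OF w(1) less.prems(2)] inK_mult this]
    obtain e1 where e1: "idem e1" "inK e1" "e1 * (w * m) \<approx> w * m" by blast
    have "w' * (w' * m) \<approx> w' * m" by (rule idem_mult_eqv[OF w'w'])
    from less.hyps[OF c2 iw' XO_mult[OF w'XO less.prems(2)] inK_mult this]
    obtain e2 where e2: "idem e2" "inK e2" "e2 * (w' * m) \<approx> w' * m" by blast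
    define e where "e = e1 + e2 - e1 * e2"
    have e1XO: "XO r e1" and e1e1: "e1 * e1 \<approx> e1" using e1(1) by (auto simp: idem_def)
    have e2XO: "XO r e2" and e2e2: "e2 * e2 \<approx> e2" using e2(1) by (auto simp: idem_def)
    have "idem e"
    proof -
      have x1: "XO r e" unfolding e_def by (intro XO_diff XO_add XO_mult e1XO e2XO)
      have x2: "e * e - e = (e1 * e1 - e1) * ((1 - e2) * (1 - e2)) + (1 - e1) * (e2 * e2 - e2)"
        by (simp add: e_def algebra_simps)
      have x3: "(e1 * e1 - e1) * ((1 - e2) * (1 - e2)) \<in> I"
        using e1e1 unfolding eqv_def by (rule in_I_multR)
      have x4: "(1 - e1) * (e2 * e2 - e2) \<in> I"
        using e2e2 unfolding eqv_def by (rule in_I_multL)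
      have "e * e - e \<in> I" unfolding x2 by (rule ideal_add[OF I_ideal x3 x4])
      then show ?thesis using x1 by (simp add: idem_def eqv_def)
    qed
    moreover have "inK e"
    proof -
      obtain f1 where f1: "e1 \<approx> G1 * f1" using e1(2) by (auto simp: inK_def)
      obtain f2 where f2: "e2 \<approx> G1 * f2" using e2(2) by (auto simp: inK_def)
      have "e - G1 * (f1 + f2 - f1 * e2) = (e1 - G1 * f1) + (e2 - G1 * f2) - e2 * (e1 - G1 * f1)"
        by (simp add: e_def algebra_simps)
      also have "\<dots> \<in> I"
      proof -
        have a1: "e1 - G1 * f1 \<in> I" using f1 by (simp add: eqv_def)
        have a2: "e2 - G1 * f2 \<in> I" using f2 by (simp add: eqv_def)
        show ?thesis
          by (rule ideal_diff[OF I_ideal ideal_add[OF I_ideal a1 a2] in_I_multL[OF a1]])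
      qed
      finally show ?thesis unfolding inK_def eqv_def by blast
    qed
    moreover have "e * m \<approx> m"
    proof -
      have ex1: "e * (w * m) \<approx> w * m"
      proof -
        have "e * (w * m) - w * m = (1 - e2) * (e1 * (w * m) - w * m)" by (simp add: e_def algebra_simps)
        also have "\<dots> \<in> I" using e1(3) unfolding eqv_def by (rule in_I_multL)
        finally show ?thesis unfolding eqv_def .
      qed
      have ex2: "e * (w' * m) \<approx> w' * m"
      proof -
        have "e * (w' * m) - w' * m = (1 - e1) * (e2 * (w' * m) - w' * m)" by (simp add: e_def algebra_simps)
        also have "\<dots> \<in> I" using e2(3) unfolding eqv_def by (rule in_I_multL)
        finally show ?thesis unfolding eqv_def .
      qed
      have "e * m \<approx> e * (u * m)" by (rule eqv_multL[OF eqv_sym[OF less.prems(4)]])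
      also have "e * (u * m) = e * (w * m) + e * (w' * m)" by (simp add: w'_def algebra_simps)
      also have "\<dots> \<approx> w * m + w' * m" by (rule eqv_add[OF ex1 ex2])
      also have "w * m + w' * m = u * m" by (simp add: w'_def algebra_simps)
      also have "\<dots> \<approx> m" by (rule less.prems(4))
      finally show ?thesis .
    qed
    ultimately show ?thesis by blast
  qed
qed

lemma purity:
  assumes p: "inK p" "ks p \<subseteq> basis_monos r tp" and q0: "ks q0 \<subseteq> basis_monos r tp"
    and pq: "sg 0 c * q0 = p"
  shows "\<exists>q. inK q \<and> ks q \<subseteq> basis_monos r tp \<and> sg 0 c * q = p"
proof -
  have pXO: "XO r p" using p(2) by (rule XO_basis)
  have q0XO: "XO r q0" using q0 by (rule XO_basis)
  have "idem 1" by (simp add: idem_def)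
  from idem_gen[OF this pXO p(1)] obtain e where e: "idem e" "inK e" "e * p \<approx> p" by auto
  have eXO: "XO r e" using e(1) by (simp add: idem_def)
  define q where "q = nf (e * q0)"
  have eqXO: "XO r (e * q0)" by (rule XO_mult[OF eXO q0XO])
  have qB: "ks q \<subseteq> basis_monos r tp" unfolding q_def by (rule nf_basis[OF eqXO])
  have qe: "q \<approx> e * q0" unfolding q_def by (rule eqv_sym[OF nf_eqv[OF eqXO]])
  have "inK q"
  proof -
    obtain f where f: "e \<approx> G1 * f" using e(2) by (auto simp: inK_def)
    have "q \<approx> e * q0" by (rule qe)
    also have "\<dots> \<approx> (G1 * f) * q0" by (rule eqv_multR[OF f])
    finally show ?thesis unfolding inK_def by (auto simp: ac_simps)
  qed
  moreover have "sg 0 c * q = p"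
  proof -
    have "sg 0 c * q \<approx> sg 0 c * (e * q0)" by (rule eqv_multL[OF qe])
    also have "sg 0 c * (e * q0) = e * p" using pq by (simp add: ac_simps)
    also have "\<dots> \<approx> p" by (rule e(3))
    finally have "sg 0 c * q - p \<in> I" by (simp add: eqv_def)
    moreover have "ks (sg 0 c * q - p) \<subseteq> basis_monos r tp"
    proof -
      have "ks (sg 0 c * q - p) \<subseteq> ks (sg 0 c * q) \<union> ks p" by (rule keys_diff)
      also have "\<dots> \<subseteq> basis_monos r tp" using keys_smult0[of c q] qB p(2) by blast
      finally show ?thesis .
    qed
    ultimately have "sg 0 c * q - p = 0" by (rule uniq)
    then show ?thesis by simp
  qed
  ultimately show ?thesis using qB by blast
qed

end


lemma residue_eq:
  "residue a c = residue a 0 \<longleftrightarrow> c \<in> principal a"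
proof
  assume h: "residue a c = residue a 0"
  have "c \<in> residue a c" using ideal_0[OF principal_ideal] by (simp add: residue_def)
  then have "c \<in> residue a 0" using h by simp
  then show "c \<in> principal a" by (simp add: residue_def)
next
  assume c: "c \<in> principal a"
  show "residue a c = residue a 0"
  proof (rule set_eqI)
    fix x
    have "x - c \<in> principal a \<longleftrightarrow> x \<in> principal a"
    proof
      assume "x - c \<in> principal a"
      then have "(x - c) + c \<in> principal a" using c by (rule ideal_add[OF principal_ideal])
      then show "x \<in> principal a" by simp
    next
      assume "x \<in> principal a"
      then show "x - c \<in> principal a" using c by (rule ideal_diff[OF principal_ideal])
    qed
    then show "x \<in> residue a c \<longleftrightarrow> x \<in> residue a 0" by (simp add: residue_def)
  qed
qed

theorem mainTheorem8:
  fixes a :: "'a::{comm_ring_1, finite}"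
    and t r :: nat
    and tp :: "nat \<Rightarrow> 'a poly"
    and I K :: "'a mpoly set"
    and G :: "nat \<Rightarrow> 'a mpoly"
  assumes chain: "chain_ring TYPE('a)"
    and max: "maximal_ideal (principal a)"
    and nilp: "t \<ge> 1" "a ^ t = 0" "a ^ (t - 1) \<noteq> 0"
    and monic: "\<And>i. i \<in> {1..r} \<Longrightarrow> lead_coeff (tp i) = 1"
    and sqfree: "\<And>i. i \<in> {1..r} \<Longrightarrow> squarefree_mod a (tp i)"
    and I_def: "I = gen_ideal ((\<lambda>i. embed_var i (tp i)) ` {1..r})"
    and adm_inter: "(\<Inter>i\<in>{0..t}. ann_mod I (G i)) = I"
    and adm_coprime: "\<And>i j. i \<in> {0..t} \<Longrightarrow> j \<in> {0..t} \<Longrightarrow> i \<noteq> j \<Longrightarrow>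
                        1 \<in> {x + y | x y. x \<in> ann_mod I (G i) \<and> y \<in> ann_mod I (G j)}"
    and K_def: "K = gen_ideal ((\<lambda>i. Poly_Mapping.single 0 (a ^ (i - 1)) * G i) ` {1..t} \<union> I)"
    and hensel1: "G 1 \<notin> I"
    and hensel2: "\<And>i. i \<in> {2..t} \<Longrightarrow> G i \<in> I"
    and nonzero: "K \<noteq> I"
  shows "min_dist 0 (code_vectors r tp K) = min_dist (residue a 0) (reduced_vectors a r tp K)"
proof -
  interpret R: rloc a t using chain max nilp by unfold_locales auto
  interpret nfl r tp I using monic I_def by unfold_locales auto
  have Iid: "is_ideal I" by (rule I_ideal)
  have annI: "f \<in> I" if "f * G 0 \<in> I" "f * G 1 \<in> I" for f
  proof -
    have "f \<in> (\<Inter>i\<in>{0..t}. ann_mod I (G i))"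
    proof (rule INT_I)
      fix i assume i: "i \<in> {0..t}"
      show "f \<in> ann_mod I (G i)"
      proof (cases "i \<le> 1")
        case True
        then have "i = 0 \<or> i = 1" by auto
        then show ?thesis using that by (auto simp: ann_mod_def)
      next
        case False
        then have "G i \<in> I" using i hensel2 by auto
        then show ?thesis by (simp add: ann_mod_def ideal_multL[OF Iid])
      qed
    qed
    then show ?thesis using adm_inter by simp
  qed
  have G01: "G 0 * G 1 \<in> I"
  proof -
    have "1 \<in> {x + y | x y. x \<in> ann_mod I (G 0) \<and> y \<in> ann_mod I (G 1)}"
      using adm_coprime[of 0 1] nilp(1) by auto
    then obtain x y where xy: "1 = x + y" "x * G 0 \<in> I" "y * G 1 \<in> I"
      by (auto simp: ann_mod_def)
    have "G 0 * G 1 = (x * G 0) * G 1 + (y * G 1) * G 0"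
      by (simp add: algebra_simps flip: distrib_right xy(1))
    also have "\<dots> \<in> I" by (rule ideal_add[OF Iid ideal_multR[OF Iid xy(2)] ideal_multR[OF Iid xy(3)]])
    finally show ?thesis .
  qed
  interpret M: mainl r tp I "G 0" "G 1"
    using annI G01 by unfold_locales auto
  have Kid: "is_ideal K" unfolding K_def by (rule gen_ideal_ideal)
  have G1K: "G 1 \<in> K"
  proof -
    have "Poly_Mapping.single 0 (a ^ (1 - 1)) * G 1 \<in> (\<lambda>i. Poly_Mapping.single 0 (a ^ (i - 1)) * G i) ` {1..t}"
      using nilp(1) by (intro imageI) auto
    then have "Poly_Mapping.single 0 (a ^ (1 - 1)) * G 1 \<in> K"
      unfolding K_def by (intro subsetD[OF gen_ideal_sub]) blast
    then show ?thesis by simp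
  qed
  have IK: "I \<subseteq> K" unfolding K_def using gen_ideal_sub by blast
  have Kchar: "p \<in> K \<longleftrightarrow> M.inK p" for p
  proof
    let ?K' = "{p. M.inK p}"
    have "is_ideal ?K'"
      unfolding is_ideal_def M.inK_def
    proof (intro conjI ballI allI)
      show "0 \<in> {p. \<exists>f. p \<approx> G 1 * f}" by (auto intro: exI[of _ 0])
    next
      fix x y assume "x \<in> {p. \<exists>f. p \<approx> G 1 * f}" "y \<in> {p. \<exists>f. p \<approx> G 1 * f}"
      then obtain f g where "x \<approx> G 1 * f" "y \<approx> G 1 * g" by auto
      then have "x + y \<approx> G 1 * (f + g)" using M.eqv_add by (simp add: distrib_left)
      then show "x + y \<in> {p. \<exists>f. p \<approx> G 1 * f}" by blast
    next
      fix x s assume "x \<in> {p. \<exists>f. p \<approx> G 1 * f}"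
      then obtain f where "x \<approx> G 1 * f" by auto
      then have "s * x \<approx> G 1 * (s * f)" using M.eqv_multL[of x "G 1 * f" s] by (simp add: ac_simps)
      then show "s * x \<in> {p. \<exists>f. p \<approx> G 1 * f}" by blast
    qed
    moreover have "(\<lambda>i. Poly_Mapping.single 0 (a ^ (i - 1)) * G i) ` {1..t} \<union> I \<subseteq> ?K'"
    proof
      fix x assume "x \<in> (\<lambda>i. Poly_Mapping.single 0 (a ^ (i - 1)) * G i) ` {1..t} \<union> I"
      then consider (g) i where "i \<in> {1..t}" "x = Poly_Mapping.single 0 (a ^ (i - 1)) * G i" | (I) "x \<in> I"
        by blast
      then show "x \<in> ?K'"
      proof cases
        case g
        show ?thesis
        proof (cases "i = 1")
          case True
          then have "x \<approx> G 1 * 1" using g by simp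
          then show ?thesis unfolding M.inK_def by blast
        next
          case False
          then have "G i \<in> I" using g(1) hensel2 by auto
          then have "x \<in> I" using g(2) ideal_multL[OF Iid] by simp
          then have "x \<approx> G 1 * 0" by (simp add: M.eqv_def)
          then show ?thesis unfolding M.inK_def by blast
        qed
      next
        case I
        then have "x \<approx> G 1 * 0" by (simp add: M.eqv_def)
        then show ?thesis unfolding M.inK_def by blast
      qed
    qed
    ultimately have "K \<subseteq> ?K'" unfolding K_def by (rule gen_ideal_least)
    then show "p \<in> K \<Longrightarrow> M.inK p" by auto
  next
    assume "M.inK p"
    then obtain f where f: "p - G 1 * f \<in> I" unfolding M.inK_def M.eqv_def by blast
    have "(p - G 1 * f) + G 1 * f \<in> K"
      using IK f ideal_multR[OF Kid G1K] by (intro ideal_add[OF Kid]) auto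
    then show "p \<in> K" by simp
  qed
  let ?B = "basis_monos r tp"
  let ?CV = "code_vectors r tp K"
  let ?RV = "reduced_vectors a r tp K"
  let ?W1 = "(\<lambda>v. card {m. v m \<noteq> 0}) ` (?CV - {\<lambda>_. 0})"
  let ?W2 = "(\<lambda>v. card {m. v m \<noteq> residue a 0}) ` (?RV - {\<lambda>_. residue a 0})"
  have W2W1: "?W2 \<subseteq> ?W1"
  proof
    fix w assume "w \<in> ?W2"
    then obtain p where p: "p \<in> K" "ks p \<subseteq> ?B"
      and nz: "(\<lambda>m. residue a (lk p m)) \<noteq> (\<lambda>_. residue a 0)"
      and w: "w = card {m. residue a (lk p m) \<noteq> residue a 0}"
      by (auto simp: reduced_vectors_def code_vectors_def)
    define p' where "p' = Poly_Mapping.single 0 (a ^ (t - 1)) * p"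
    have "p' \<in> K" unfolding p'_def using p(1) by (rule ideal_multL[OF Kid])
    moreover have "ks p' \<subseteq> ?B" using keys_smult0 p(2) unfolding p'_def by blast
    moreover have lp: "lk p' m \<noteq> 0 \<longleftrightarrow> residue a (lk p m) \<noteq> residue a 0" for m
      unfolding p'_def lookup_smult0 residue_eq R.ann_char by simp
    ultimately have "lk p' \<in> ?CV" by (auto simp: code_vectors_def)
    moreover have "lk p' \<noteq> (\<lambda>_. 0)" using nz lp by fastforce
    moreover have "card {m. lk p' m \<noteq> 0} = w" using w lp by simp
    ultimately show "w \<in> ?W1" by force
  qed
  have W1W2: "\<exists>w2\<in>?W2. w2 \<le> w1" if "w1 \<in> ?W1" for w1
  proof -
    from that obtain p where p: "p \<in> K" "ks p \<subseteq> ?B" and nz: "lk p \<noteq> (\<lambda>_. 0)"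
      and w1: "w1 = card {m. lk p m \<noteq> 0}"
      by (auto simp: code_vectors_def)
    let ?J = "{j. j < t \<and> (\<forall>m. \<exists>c. lk p m = a ^ j * c)}"
    have J0: "0 \<in> ?J" using nilp(1) by auto
    have finJ: "finite ?J" by (rule finite_subset[of _ "{..<t}"]) auto
    define j where "j = Max ?J"
    have jJ: "j \<in> ?J" unfolding j_def using finJ J0 by (intro Max_in) auto
    then have jt: "j < t" and jdiv: "\<And>m. \<exists>c. lk p m = a ^ j * c" by auto
    define qf where "qf m = (SOME c. lk p m = a ^ j * c)" for m
    have qf: "lk p m = a ^ j * qf m" for m unfolding qf_def by (rule someI_ex[OF jdiv])
    define q0 where "q0 = (\<Sum>m\<in>ks p. Poly_Mapping.single m (qf m))"
    have lq0: "lk q0 m = (if m \<in> ks p then qf m else 0)" for m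
      unfolding q0_def lookup_sum by (simp add: lookup_single when_def)
    have kq0: "ks q0 \<subseteq> ?B"
    proof -
      have "ks q0 \<subseteq> ks p" by (auto simp: in_keys_iff lq0 split: if_splits)
      then show ?thesis using p(2) by blast
    qed
    have pq0: "Poly_Mapping.single 0 (a ^ j) * q0 = p"
      by (rule poly_mapping_eqI) (auto simp: lookup_smult0 lq0 qf in_keys_iff)
    have "M.inK p" using p(1) Kchar by blast
    from M.purity[OF this p(2) kq0 pq0] obtain q where
      q: "M.inK q" "ks q \<subseteq> ?B" "Poly_Mapping.single 0 (a ^ j) * q = p" by blast
    have lpq: "lk p m = a ^ j * lk q m" for m using q(3) lookup_smult0 by metis
    have qK: "q \<in> K" using q(1) Kchar by blast
    have "lk q \<in> ?CV" using qK q(2) by (auto simp: code_vectors_def)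
    then have inRV: "(\<lambda>m. residue a (lk q m)) \<in> ?RV" by (auto simp: reduced_vectors_def)
    have ex: "\<exists>m. lk q m \<notin> principal a"
    proof (rule ccontr)
      assume "\<not> (\<exists>m. lk q m \<notin> principal a)"
      then have all: "\<forall>m. \<exists>s. lk q m = s * a" by (auto simp: in_principal)
      have pm: "\<forall>m. \<exists>s. lk p m = a ^ (Suc j) * s"
      proof
        fix m obtain s where "lk q m = s * a" using all by blast
        then show "\<exists>s. lk p m = a ^ (Suc j) * s" using lpq[of m] by (auto simp: ac_simps intro!: exI[of _ s])
      qed
      show False
      proof (cases "Suc j < t")
        case True
        then have "Suc j \<in> ?J" using pm by auto
        then have "Suc j \<le> j" unfolding j_def by (rule Max_ge[OF finJ])
        then show False by simp
      next
        case False
        then have "Suc j = t" using jt by simp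
        then have "lk p m = 0" for m using pm nilp(2) by auto
        then show False using nz by auto
      qed
    qed
    have nz2: "(\<lambda>m. residue a (lk q m)) \<noteq> (\<lambda>_. residue a 0)"
      using ex residue_eq by metis
    define w2 where "w2 = card {m. residue a (lk q m) \<noteq> residue a 0}"
    have "w2 \<in> ?W2" using inRV nz2 unfolding w2_def by force
    moreover have "w2 \<le> w1"
    proof -
      have "{m. residue a (lk q m) \<noteq> residue a 0} \<subseteq> {m. lk p m \<noteq> 0}"
      proof
        fix m assume "m \<in> {m. residue a (lk q m) \<noteq> residue a 0}"
        then have "lk q m \<notin> principal a" using residue_eq by auto
        then have "a ^ j * lk q m \<noteq> 0" using R.pow_unit_nz[OF jt] by blast
        then show "m \<in> {m. lk p m \<noteq> 0}" using lpq by simp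
      qed
      moreover have "finite {m. lk p m \<noteq> 0}" by (simp add: in_keys_iff[symmetric])
      ultimately show ?thesis unfolding w2_def w1 by (rule card_mono[rotated])
    qed
    ultimately show ?thesis by blast
  qed
  have finW1: "finite ?W1"
  proof (rule finite_subset[of _ "{..card ?B}"])
    show "?W1 \<subseteq> {..card ?B}"
    proof
      fix w assume "w \<in> ?W1"
      then obtain v where v: "v \<in> ?CV" "w = card {m. v m \<noteq> 0}" by blast
      then obtain p where p0: "v = lk p" "ks p \<subseteq> ?B" by (auto simp: code_vectors_def)
      then have p: "ks p \<subseteq> ?B" "w = card {m. lk p m \<noteq> 0}" using v by auto
      have "{m. lk p m \<noteq> 0} = ks p" by (auto simp: in_keys_iff)
      then have "w = card (ks p)" using p(2) by simp
      also have "\<dots> \<le> card ?B" using p(1) finite_basis by (rule card_mono[rotated])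
      finally show "w \<in> {..card ?B}" by simp
    qed
  qed simp
  have eq: "Min ?W1 = Min ?W2"
  proof (cases "?W1 = {}")
    case True
    then have e2: "?W2 = {}" using W2W1 by blast
    show ?thesis by (simp only: True e2)
  next
    case False
    have m1: "Min ?W1 \<in> ?W1" using finW1 False by (rule Min_in)
    then obtain w2 where w2: "w2 \<in> ?W2" "w2 \<le> Min ?W1" using W1W2 by blast
    have finW2: "finite ?W2" using finW1 W2W1 by (rule finite_subset[rotated])
    have ne2: "?W2 \<noteq> {}" using w2 by blast
    have "Min ?W2 \<in> ?W1" using Min_in[OF finW2 ne2] W2W1 by blast
    then have "Min ?W1 \<le> Min ?W2" using finW1 by simp
    moreover have "Min ?W2 \<le> Min ?W1" using Min_le[OF finW2 w2(1)] w2(2) by simp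
    ultimately show ?thesis by simp
  qed
  then show ?thesis unfolding min_dist_def .
qed


end
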